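(* Let $T:\mathcal{B}(\mathcal{H}_2)\to\mathcal{B}(\mathcal{H}_1)$ be a channel. Let $(n_\alpha)_{\alpha\in\mathbb{N}}$ be a strictly increasing sequence of positive integers such that $\lim_{\alpha\to\infty} n_{\alpha+1}/n_\alpha=1$, and let $M_\alpha$ be positive integers such that $\lim_{\alpha\to\infty}\Delta(T^{\otimes n_\alpha},M_\alpha)=0$. Then every $c\ge 0$ with $$c<\liminf_{\alpha\to\infty}\frac{\log_2 M_\alpha}{n_\alpha}$$ is an achievable rate for $T$. Moreover, if in addition there are constants $\mu,\lambda\ge 0$ with $\Delta(T^{\otimes n_\alpha},M_\alpha)\le \mu e^{-\lambda n_\alpha}$ for all $\alpha$, then for every such $c$ $$\liminf_{n\to\infty}\frac{-1}{n}\log\Delta\bigl(T^{\otimes n},\lfloor 2^{cn}\rfloor\bigr)\ge\lambda .$$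
   Context: All Hilbert spaces are finite dimensional; $\mathcal{B}(\mathcal{H})$ denotes the linear operators on $\mathcal{H}$. A channel with input space $\mathcal{H}_1$ and output space $\mathcal{H}_2$ is a completely positive unital linear map $T:\mathcal{B}(\mathcal{H}_2)\to\mathcal{B}(\mathcal{H}_1)$ (Heisenberg picture). For a linear map $S:\mathcal{B}(\mathcal{K}_2)\to\mathcal{B}(\mathcal{K}_1)$ its cb-norm is $\|S\|_{cb}=\sup\{\|(S\otimes \mathrm{id}_{\mathcal{B}(\mathbb{C}^k)})(A)\| : k\in\mathbb{N},\ A\in\mathcal{B}(\mathcal{K}_2\otimes\mathbb{C}^k),\ \|A\|\le1\}$. For a channel $T:\mathcal{B}(\mathcal{H}_2)\to\mathcal{B}(\mathcal{H}_1)$ and a positive integer $M$, $\Delta(T,M)=\inf_{E,D}\|E\circ T\circ D-\mathrm{id}\|_{cb}$, where $\mathcal{H}_0$ is a Hilbert space of dimension $M$, $\mathrm{id}$ is the identity map of $\mathcal{B}(\mathcal{H}_0)$, and the infimum runs over all channels $D:\mathcal{B}(\mathcal{H}_0)\to\mathcal{B}(\mathcal{H}_2)$ (decodings) and $E:\mathcal{B}(\mathcal{H}_1)\to\mathcal{B}(\mathcal{H}_0)$ (encodings). $T^{\otimes n}:\mathcal{B}(\mathcal{H}_2^{\otimes n})\to\mathcal{B}(\mathcal{H}_1^{\otimes n})$ is the $n$-fold tensor power. A number $c\ge0$ is an achievable rate for $T$ if $\lim_{n\to\infty}\Delta(T^{\otimes n},\lfloor 2^{cn}\rfloor)=0$;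 $\lfloor x\rfloor$ is the largest integer $\le x$. In the last display $\log$ is the natural logarithm. *)

theory Defs
  imports "HOL-Analysis.Analysis" "HOL-Library.Liminf_Limsup" "Jordan_Normal_Form.Matrix"
begin

text \<open>A finite-dimensional Hilbert space of dimension d is modelled as C^d, and
  B(H) as the d x d complex matrices (carrier_mat d d). A linear map
  B(K2) -> B(K1) is a function on complex matrices, considered on carrier_mat d2 d2.\<close>

definition vnorm :: "complex vec \<Rightarrow> real" where
  "vnorm v = sqrt (\<Sum>i<dim_vec v. (cmod (v $ i))\<^sup>2)"

definition opnorm :: "complex mat \<Rightarrow> real" where
  "opnorm A = Sup {vnorm (A *\<^sub>v v) | v. v \<in> carrier_vec (dim_col A) \<and> vnorm v \<le> 1}"

definition psd :: "nat \<Rightarrow> complex mat \<Rightarrow> bool" where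
  "psd d A \<longleftrightarrow> A \<in> carrier_mat d d \<and>
     (\<forall>v \<in> carrier_vec d. let z = (\<Sum>i<d. cnj (v $ i) * (A *\<^sub>v v) $ i) in Im z = 0 \<and> Re z \<ge> 0)"

definition munit :: "nat \<Rightarrow> nat \<Rightarrow> nat \<Rightarrow> complex mat" where
  "munit e b c = mat e e (\<lambda>(i,j). if i = b \<and> j = c then 1 else 0)"

text \<open>Block (b,c) of a matrix on C^d (x) C^e, index of (a,b) being a*e+b.\<close>
definition blk :: "nat \<Rightarrow> nat \<Rightarrow> complex mat \<Rightarrow> nat \<Rightarrow> nat \<Rightarrow> complex mat" where
  "blk d e A b c = mat d d (\<lambda>(a,a'). A $$ (a*e+b, a'*e+c))"

text \<open>Tensor product S1 (x) S2 of linear maps S1 : B(C^d2) -> B(C^d1),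
  S2 : B(C^e2) -> B(C^e1), as a map B(C^d2 (x) C^e2) -> B(C^d1 (x) C^e1):
  (S1 (x) S2)(A) = sum_{b,c} S1(A_bc) (x) S2(E_bc), where A = sum_{b,c} A_bc (x) E_bc.\<close>
definition map_tensor ::
  "(complex mat \<Rightarrow> complex mat) \<Rightarrow> nat \<Rightarrow> nat \<Rightarrow>
   (complex mat \<Rightarrow> complex mat) \<Rightarrow> nat \<Rightarrow> nat \<Rightarrow> complex mat \<Rightarrow> complex mat" where
  "map_tensor S1 d1 d2 S2 e1 e2 A =
     mat (d1*e1) (d1*e1) (\<lambda>(i,j).
       \<Sum>b<e2. \<Sum>c<e2. S1 (blk d2 e2 A b c) $$ (i div e1, j div e1)
                       * S2 (munit e2 b c) $$ (i mod e1, j mod e1))"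

definition ampl :: "(complex mat \<Rightarrow> complex mat) \<Rightarrow> nat \<Rightarrow> nat \<Rightarrow> nat \<Rightarrow> complex mat \<Rightarrow> complex mat" where
  "ampl S d1 d2 k = map_tensor S d1 d2 (\<lambda>A. A) k k"

definition lin_map :: "(complex mat \<Rightarrow> complex mat) \<Rightarrow> nat \<Rightarrow> nat \<Rightarrow> bool" where
  "lin_map S d1 d2 \<longleftrightarrow>
     (\<forall>A \<in> carrier_mat d2 d2. S A \<in> carrier_mat d1 d1) \<and>
     (\<forall>A \<in> carrier_mat d2 d2. \<forall>B \<in> carrier_mat d2 d2. S (A + B) = S A + S B) \<and>
     (\<forall>A \<in> carrier_mat d2 d2. \<forall>z. S (z \<cdot>\<^sub>m A) = z \<cdot>\<^sub>m S A)"

definition cb_norm :: "(complex mat \<Rightarrow> complex mat) \<Rightarrow> nat \<Rightarrow> nat \<Rightarrow> real" where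
  "cb_norm S d1 d2 = Sup {opnorm (ampl S d1 d2 k A) | k A.
       k > 0 \<and> A \<in> carrier_mat (d2*k) (d2*k) \<and> opnorm A \<le> 1}"

text \<open>Channel with input space C^d1 and output space C^d2 (Heisenberg picture):
  completely positive unital linear map T : B(C^d2) -> B(C^d1).\<close>
definition channel :: "(complex mat \<Rightarrow> complex mat) \<Rightarrow> nat \<Rightarrow> nat \<Rightarrow> bool" where
  "channel T d1 d2 \<longleftrightarrow> lin_map T d1 d2 \<and> T (1\<^sub>m d2) = 1\<^sub>m d1 \<and>
     (\<forall>k>0. \<forall>A. psd (d2*k) A \<longrightarrow> psd (d1*k) (ampl T d1 d2 k A))"

definition Delta :: "(complex mat \<Rightarrow> complex mat) \<Rightarrow> nat \<Rightarrow> nat \<Rightarrow> nat \<Rightarrow> real" where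
  "Delta T d1 d2 M = Inf {cb_norm (\<lambda>A. E (T (D A)) - A) M M | E D.
       channel D d2 M \<and> channel E M d1}"

text \<open>n-fold tensor power T^{(x)n} : B((C^d2)^{(x)n}) -> B((C^d1)^{(x)n}),
  with (C^d)^{(x)(n+1)} = (C^d)^{(x)n} (x) C^d.\<close>
fun tpow :: "(complex mat \<Rightarrow> complex mat) \<Rightarrow> nat \<Rightarrow> nat \<Rightarrow> nat \<Rightarrow> complex mat \<Rightarrow> complex mat" where
  "tpow T d1 d2 0 = (\<lambda>A. A)"
| "tpow T d1 d2 (Suc n) = map_tensor (tpow T d1 d2 n) (d1^n) (d2^n) T d1 d2"

definition DeltaPow :: "(complex mat \<Rightarrow> complex mat) \<Rightarrow> nat \<Rightarrow> nat \<Rightarrow> nat \<Rightarrow> nat \<Rightarrow> real" where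
  "DeltaPow T d1 d2 n M = Delta (tpow T d1 d2 n) (d1^n) (d2^n) M"

definition achievable :: "(complex mat \<Rightarrow> complex mat) \<Rightarrow> nat \<Rightarrow> nat \<Rightarrow> real \<Rightarrow> bool" where
  "achievable T d1 d2 c \<longleftrightarrow> c \<ge> 0 \<and>
     (\<lambda>n. DeltaPow T d1 d2 n (nat \<lfloor>2 powr (c * real n)\<rfloor>)) \<longlonglongrightarrow> 0"

definition neglog_rate :: "nat \<Rightarrow> real \<Rightarrow> ereal" where
  "neglog_rate n x = (if x = 0 then \<infinity> else ereal (- ln x / real n))"

end

theory Submission
  imports Defs
begin


lemma sum_lessThan_add: "(\<Sum>i<a+(b::nat). g i) = (\<Sum>i<a. g i) + (\<Sum>i<b. g (a+i))"
  by (induct b) (auto simp: add.assoc)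

lemma sum_split: "(\<Sum>i<m*(k::nat). g i) = (\<Sum>x<m. \<Sum>b<k. g (x*k+b))"
proof (induct m)
  case (Suc m)
  have "(\<Sum>i<Suc m*k. g i) = (\<Sum>i<m*k + k. g i)" by (simp add: add.commute)
  also have "\<dots> = (\<Sum>i<m*k. g i) + (\<Sum>b<k. g (m*k+b))" by (rule sum_lessThan_add)
  finally show ?case using Suc by simp
qed simp

lemma sum_delta2:
  assumes "x < k" "y < (k::nat)"
  shows "(\<Sum>b<k. \<Sum>c<k. if x = b \<and> y = c then f b c else 0) = f x y"
proof -
  have "(\<Sum>b<k. \<Sum>c<k. if x = b \<and> y = c then f b c else 0)
      = (\<Sum>b<k. if x = b then (\<Sum>c<k. if y = c then f b c else 0) else 0)"
    by (rule sum.cong) auto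
  also have "\<dots> = (\<Sum>c<k. if y = c then f x c else 0)"
    using assms(1) by (subst sum.delta') auto
  also have "\<dots> = f x y"
    using assms(2) by (subst sum.delta') auto
  finally show ?thesis .
qed

section \<open>Norms\<close>

definition nrm :: "nat \<Rightarrow> (nat \<Rightarrow> complex) \<Rightarrow> real" where
  "nrm n f = sqrt (\<Sum>i<n. (cmod (f i))\<^sup>2)"

lemma nrm_L2: "nrm n f = L2_set (\<lambda>i. cmod (f i)) {..<n}"
  by (simp add: nrm_def L2_set_def)

lemma nrm_nonneg: "nrm n f \<ge> 0"
  by (simp add: nrm_def sum_nonneg)

lemma nrm_cong: "(\<And>i. i < n \<Longrightarrow> f i = g i) \<Longrightarrow> nrm n f = nrm n g"
  by (simp add: nrm_def)

lemma nrm_sq: "(nrm n f)\<^sup>2 = (\<Sum>i<n. (cmod (f i))\<^sup>2)"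
  by (simp add: nrm_def sum_nonneg)

lemma nrm_entry: "j < n \<Longrightarrow> cmod (f j) \<le> nrm n f"
  unfolding nrm_L2 by (rule member_le_L2_set[where f="\<lambda>i. cmod (f i)"]) auto

lemma nrm_add: "nrm n (\<lambda>i. f i + g i) \<le> nrm n f + nrm n g"
proof -
  have "nrm n (\<lambda>i. f i + g i) \<le> L2_set (\<lambda>i. cmod (f i) + cmod (g i)) {..<n}"
    unfolding nrm_L2 by (rule L2_set_mono) (auto simp: norm_triangle_ineq)
  also have "\<dots> \<le> nrm n f + nrm n g" unfolding nrm_L2 by (rule L2_set_triangle_ineq)
  finally show ?thesis .
qed

lemma nrm_scale: "nrm n (\<lambda>i. c * f i) = cmod c * nrm n f"
  unfolding nrm_L2 by (simp add: norm_mult L2_set_right_distrib)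

lemma nrm_zero: "nrm n (\<lambda>i. 0) = 0"
  by (simp add: nrm_def)

lemma nrm_sum: "finite S \<Longrightarrow> nrm n (\<lambda>i. \<Sum>s\<in>S. f s i) \<le> (\<Sum>s\<in>S. nrm n (f s))"
proof (induct S rule: finite_induct)
  case empty then show ?case by (simp add: nrm_zero)
next
  case (insert x F)
  have "nrm n (\<lambda>i. \<Sum>s\<in>insert x F. f s i) = nrm n (\<lambda>i. f x i + (\<Sum>s\<in>F. f s i))"
    using insert by simp
  also have "\<dots> \<le> nrm n (f x) + nrm n (\<lambda>i. \<Sum>s\<in>F. f s i)" by (rule nrm_add)
  also have "\<dots> \<le> nrm n (f x) + (\<Sum>s\<in>F. nrm n (f s))" using insert by simp
  finally show ?case using insert by simp
qed

lemma nrm_le_sq: "(\<Sum>i<n. (cmod (f i))\<^sup>2) \<le> (\<Sum>i<m. (cmod (g i))\<^sup>2) \<Longrightarrow> nrm n f \<le> nrm m g"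
  by (simp add: nrm_def)

lemma nrm_le_sqD: "nrm n f \<le> nrm m g \<Longrightarrow> (\<Sum>i<n. (cmod (f i))\<^sup>2) \<le> (\<Sum>i<m. (cmod (g i))\<^sup>2)"
  by (metis nrm_sq nrm_nonneg power_mono)

lemma vnorm_nrm: "vnorm (v::complex vec) = nrm (dim_vec v) (\<lambda>i. v $ i)"
  by (simp add: vnorm_def nrm_def)

lemma mult_mat_vec_idx:
  assumes "A \<in> carrier_mat r c" "(v::complex vec) \<in> carrier_vec c" "i < r"
  shows "(A *\<^sub>v v) $ i = (\<Sum>j<c. A $$ (i,j) * v $ j)"
proof -
  have "(A *\<^sub>v v) $ i = row A i \<bullet> v" using assms by auto
  also have "\<dots> = (\<Sum>j\<in>{0..<dim_vec v}. row A i $ j * v $ j)" by (simp add: scalar_prod_def)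
  also have "\<dots> = (\<Sum>j<c. A $$ (i,j) * v $ j)"
    using assms by (auto simp: atLeast0LessThan intro!: sum.cong)
  finally show ?thesis .
qed

definition mv :: "complex mat \<Rightarrow> nat \<Rightarrow> (nat \<Rightarrow> complex) \<Rightarrow> nat \<Rightarrow> complex" where
  "mv A c f i = (\<Sum>j<c. A $$ (i,j) * f j)"

lemma mv_fun: "mv A c f = (\<lambda>i. \<Sum>j<c. A $$ (i,j) * f j)"
  by (simp add: fun_eq_iff mv_def)

lemma vnorm_mult:
  assumes "A \<in> carrier_mat r c" "(v::complex vec) \<in> carrier_vec c"
  shows "vnorm (A *\<^sub>v v) = nrm r (mv A c (\<lambda>j. v $ j))"
  using assms unfolding vnorm_nrm mv_def
  by (auto intro!: nrm_cong simp: mult_mat_vec_idx simp del: index_mult_mat_vec)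

definition opset :: "complex mat \<Rightarrow> real set" where
  "opset A = {vnorm (A *\<^sub>v v) | v. v \<in> carrier_vec (dim_col A) \<and> vnorm v \<le> 1}"

lemma opnorm_opset: "opnorm A = Sup (opset A)"
  by (simp add: opnorm_def opset_def)

lemma opset_fun:
  assumes "A \<in> carrier_mat r c"
  shows "opset A = {nrm r (mv A c f) | f. nrm c f \<le> 1}"
proof -
  have "nrm r (mv A c f) \<in> opset A" if "nrm c f \<le> 1" for f
  proof -
    have "vnorm (vec c f) = nrm c f" unfolding vnorm_nrm by (auto intro: nrm_cong)
    moreover have "mv A c (\<lambda>j. vec c f $ j) = mv A c f" by (simp add: mv_def fun_eq_iff)
    ultimately show ?thesis using that assms unfolding opset_def
      by (auto intro!: exI[of _ "vec c f"] simp: vnorm_mult)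
  qed
  moreover have "x \<in> {nrm r (mv A c f) | f. nrm c f \<le> 1}" if xin: "x \<in> opset A" for x
  proof -
    have "dim_col A = c" using assms by auto
    then obtain v where v: "x = vnorm (A *\<^sub>v v)" "v \<in> carrier_vec c" "vnorm v \<le> 1"
      using xin unfolding opset_def by auto
    have "x = nrm r (mv A c (\<lambda>j. v $ j))" using v assms vnorm_mult by auto
    moreover have "nrm c (\<lambda>j. v $ j) \<le> 1" using v by (simp add: vnorm_nrm)
    ultimately show ?thesis by blast
  qed
  ultimately show ?thesis by blast
qed

lemma mv_bound:
  assumes "nrm c f \<le> 1"
  shows "nrm r (mv A c f) \<le> (\<Sum>i<r. \<Sum>j<c. cmod (A $$ (i,j)))"
proof -
  have "nrm r (mv A c f) \<le> (\<Sum>i<r. cmod (mv A c f i))"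
    unfolding nrm_L2 by (rule L2_set_le_sum) auto
  also have "\<dots> \<le> (\<Sum>i<r. \<Sum>j<c. cmod (A $$ (i,j)))"
  proof (rule sum_mono)
    fix i
    have "cmod (mv A c f i) \<le> (\<Sum>j<c. cmod (A $$ (i,j) * f j))"
      unfolding mv_def by (rule norm_sum)
    also have "\<dots> \<le> (\<Sum>j<c. cmod (A $$ (i,j)))"
    proof (rule sum_mono)
      fix j assume "j \<in> {..<c}"
      then have "cmod (f j) \<le> 1" using nrm_entry[of j c f] assms by auto
      then show "cmod (A $$ (i,j) * f j) \<le> cmod (A $$ (i,j))"
        by (simp add: norm_mult mult_left_le)
    qed
    finally show "cmod (mv A c f i) \<le> (\<Sum>j<c. cmod (A $$ (i,j)))" .
  qed
  finally show ?thesis .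
qed

lemma opset_bdd: "A \<in> carrier_mat r c \<Longrightarrow> bdd_above (opset A)"
  unfolding opset_fun by (rule bdd_aboveI[where M="\<Sum>i<r. \<Sum>j<c. cmod (A$$(i,j))"]) (auto intro: mv_bound)

lemma opset_ne: "A \<in> carrier_mat r c \<Longrightarrow> 0 \<in> opset A"
  unfolding opset_fun by (auto intro!: exI[of _ "\<lambda>i. 0"] simp: nrm_zero mv_fun)

lemma opnorm_nonneg: "A \<in> carrier_mat r c \<Longrightarrow> opnorm A \<ge> 0"
  unfolding opnorm_opset by (meson cSup_upper opset_bdd opset_ne)

lemma opnorm_upper: "A \<in> carrier_mat r c \<Longrightarrow> nrm c f \<le> 1 \<Longrightarrow> nrm r (mv A c f) \<le> opnorm A"
  unfolding opnorm_opset by (rule cSup_upper[OF _ opset_bdd]) (auto simp: opset_fun)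

lemma opnorm_leI:
  assumes "A \<in> carrier_mat r c" "\<And>f. nrm c f \<le> 1 \<Longrightarrow> nrm r (mv A c f) \<le> t"
  shows "opnorm A \<le> t"
  unfolding opnorm_opset using assms opset_ne[OF assms(1)]
  by (intro cSup_least) (auto simp: opset_fun)

lemma opnorm_zero: "opnorm (0\<^sub>m r c) = 0"
proof -
  have "opnorm (0\<^sub>m r c) \<le> 0"
  proof (rule opnorm_leI[of _ r c])
    fix f
    have "nrm r (mv (0\<^sub>m r c) c f) = nrm r (\<lambda>i. 0)" by (rule nrm_cong) (simp add: mv_def)
    then show "nrm r (mv (0\<^sub>m r c) c f) \<le> 0" by (simp add: nrm_zero)
  qed auto
  then show ?thesis using opnorm_nonneg[of "0\<^sub>m r c" r c] by auto
qed

lemma mv_scale: "mv A c (\<lambda>j. s * f j) i = s * mv A c f i"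
  by (simp add: mv_def sum_distrib_left mult_ac)

lemma opnorm_contr:
  assumes "A \<in> carrier_mat r c" "opnorm A \<le> 1"
  shows "nrm r (mv A c f) \<le> nrm c f"
proof (cases "nrm c f = 0")
  case True
  then have "\<forall>j<c. f j = 0" using nrm_entry[of _ c f] by (metis norm_le_zero_iff)
  then have "mv A c f = (\<lambda>i. 0)" by (simp add: mv_fun)
  then show ?thesis by (simp add: nrm_zero nrm_nonneg)
next
  case False
  then have pos: "nrm c f > 0" using nrm_nonneg[of c f] by auto
  define s where "s = complex_of_real (1 / nrm c f)"
  have "cmod s = 1 / nrm c f" using pos by (simp add: s_def norm_divide)
  then have "nrm c (\<lambda>j. s * f j) = 1" using pos by (simp only: nrm_scale) simp
  then have "nrm r (mv A c (\<lambda>j. s * f j)) \<le> 1"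
    using opnorm_upper[OF assms(1), of "\<lambda>j. s * f j"] assms(2) by linarith
  moreover have "mv A c (\<lambda>j. s * f j) = (\<lambda>i. s * mv A c f i)" by (simp add: fun_eq_iff mv_scale)
  ultimately have "cmod s * nrm r (mv A c f) \<le> 1" by (simp only: nrm_scale)
  then have "nrm r (mv A c f) / nrm c f \<le> 1" using \<open>cmod s = 1 / nrm c f\<close> by simp
  then show ?thesis using pos by (simp add: field_simps)
qed

lemma opnorm_contr_sq:
  assumes "A \<in> carrier_mat r c" "opnorm A \<le> 1"
  shows "(\<Sum>i<r. (cmod (mv A c f i))\<^sup>2) \<le> (\<Sum>j<c. (cmod (f j))\<^sup>2)"
  using nrm_le_sqD[OF opnorm_contr[OF assms]] .




section \<open>Quadratic forms and psd\<close>

lemma prod_sums: "(\<Sum>i\<in>I. a i) * (z::complex) * (\<Sum>j\<in>J. b j) = (\<Sum>i\<in>I. \<Sum>j\<in>J. a i * z * b j)"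
  by (simp add: sum_distrib_left sum_distrib_right) (rule sum.swap)
lemma sum_swap4: "(\<Sum>x\<in>X. \<Sum>y\<in>Y. \<Sum>i\<in>I. \<Sum>j\<in>J. h x y i j) = (\<Sum>i\<in>I. \<Sum>j\<in>J. \<Sum>x\<in>X. \<Sum>y\<in>Y. h x y i j)"
proof -
  have "(\<Sum>x\<in>X. \<Sum>y\<in>Y. \<Sum>i\<in>I. \<Sum>j\<in>J. h x y i j) = (\<Sum>x\<in>X. \<Sum>i\<in>I. \<Sum>y\<in>Y. \<Sum>j\<in>J. h x y i j)"
    by (rule sum.cong[OF refl], rule sum.swap)
  also have "\<dots> = (\<Sum>i\<in>I. \<Sum>x\<in>X. \<Sum>y\<in>Y. \<Sum>j\<in>J. h x y i j)" by (rule sum.swap)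
  also have "\<dots> = (\<Sum>i\<in>I. \<Sum>x\<in>X. \<Sum>j\<in>J. \<Sum>y\<in>Y. h x y i j)" by (intro sum.cong refl, rule sum.swap)
  also have "\<dots> = (\<Sum>i\<in>I. \<Sum>j\<in>J. \<Sum>x\<in>X. \<Sum>y\<in>Y. h x y i j)" by (rule sum.cong[OF refl], rule sum.swap)
  finally show ?thesis .
qed
lemma "x < d*(k::nat) \<Longrightarrow> p < k \<Longrightarrow> (x*k+p) mod k = p \<and> (x*k+p) div k = x"
  by simp
lemma idx_lt: assumes "x < c" "p < (k::nat)" shows "x*k+p < c*k"
proof -
  have "Suc x * k \<le> c * k" using assms(1) by (intro mult_le_mono1) simp
  then show ?thesis using assms(2) by simp
qed

definition qf :: "nat \<Rightarrow> complex mat \<Rightarrow> (nat \<Rightarrow> complex) \<Rightarrow> complex" where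
  "qf d A f = (\<Sum>i<d. \<Sum>j<d. cnj (f i) * A $$ (i,j) * f j)"

lemma qf_vec:
  assumes "A \<in> carrier_mat d d" "(v::complex vec) \<in> carrier_vec d"
  shows "(\<Sum>i<d. cnj (v $ i) * (A *\<^sub>v v) $ i) = qf d A (\<lambda>i. v $ i)"
  unfolding qf_def using assms
  by (auto simp: mult_mat_vec_idx sum_distrib_left mult.assoc simp del: index_mult_mat_vec intro!: sum.cong)

lemma psd_iff: "psd d A \<longleftrightarrow> A \<in> carrier_mat d d \<and> (\<forall>f. Im (qf d A f) = 0 \<and> Re (qf d A f) \<ge> 0)"
proof
  assume p: "psd d A"
  then have A: "A \<in> carrier_mat d d" by (simp add: psd_def)
  show "A \<in> carrier_mat d d \<and> (\<forall>f. Im (qf d A f) = 0 \<and> Re (qf d A f) \<ge> 0)"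
  proof (intro conjI allI A)
    fix f :: "nat \<Rightarrow> complex"
    have v: "vec d f \<in> carrier_vec d" by simp
    have "qf d A (\<lambda>i. Matrix.vec d f $ i) = qf d A f" unfolding qf_def by (auto intro!: sum.cong)
    then have "Im (qf d A f) = 0 \<and> Re (qf d A f) \<ge> 0"
      using p v qf_vec[OF A v] unfolding psd_def Let_def by metis
    then show "Im (qf d A f) = 0" "Re (qf d A f) \<ge> 0" by auto
  qed
next
  assume r: "A \<in> carrier_mat d d \<and> (\<forall>f. Im (qf d A f) = 0 \<and> Re (qf d A f) \<ge> 0)"
  then have A: "A \<in> carrier_mat d d" by simp
  have "Im (\<Sum>i<d. cnj (v $ i) * (A *\<^sub>v v) $ i) = 0 \<and> Re (\<Sum>i<d. cnj (v $ i) * (A *\<^sub>v v) $ i) \<ge> 0"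
    if v: "v \<in> carrier_vec d" for v
    unfolding qf_vec[OF A v] using r by simp
  then show "psd d A" unfolding psd_def Let_def using A by simp
qed

lemma delta_prod:
  assumes "gi < m" "gj < (m::nat)"
  shows "(\<Sum>x<m. \<Sum>y<m. (if gi = x then \<alpha> else 0) * F x y * (if gj = y then \<beta> else 0)) = (\<alpha> * F gi gj * \<beta> :: complex)"
proof -
  have "(\<Sum>x<m. \<Sum>y<m. (if gi = x then \<alpha> else 0) * F x y * (if gj = y then \<beta> else 0))
     = (\<Sum>x<m. \<Sum>y<m. if gi = x \<and> gj = y then \<alpha> * F x y * \<beta> else 0)"
    by (intro sum.cong) auto
  also have "\<dots> = \<alpha> * F gi gj * \<beta>" by (rule sum_delta2[OF assms])
  finally show ?thesis .
qed

lemma qf_cong: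
  assumes "\<And>i. i < N \<Longrightarrow> g i < m"
  shows "qf m A (\<lambda>x. \<Sum>i<N. if g i = x then c i * f i else 0)
       = (\<Sum>i<N. \<Sum>j<N. cnj (c i * f i) * A $$ (g i, g j) * (c j * f j))"
proof -
  have "qf m A (\<lambda>x. \<Sum>i<N. if g i = x then c i * f i else 0)
     = (\<Sum>x<m. \<Sum>y<m. (\<Sum>i<N. if g i = x then cnj (c i * f i) else 0) * A $$ (x,y)
           * (\<Sum>j<N. if g j = y then c j * f j else 0))"
    unfolding qf_def by (simp add: cnj_sum if_distrib[of cnj] cong: if_cong)
  also have "\<dots> = (\<Sum>x<m. \<Sum>y<m. \<Sum>i<N. \<Sum>j<N. (if g i = x then cnj (c i * f i) else 0) * A $$ (x,y)
           * (if g j = y then c j * f j else 0))"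
    by (simp only: prod_sums)
  also have "\<dots> = (\<Sum>i<N. \<Sum>j<N. \<Sum>x<m. \<Sum>y<m. (if g i = x then cnj (c i * f i) else 0) * A $$ (x,y)
           * (if g j = y then c j * f j else 0))"
    by (rule sum_swap4)
  also have "\<dots> = (\<Sum>i<N. \<Sum>j<N. cnj (c i * f i) * A $$ (g i, g j) * (c j * f j))"
    using assms by (intro sum.cong refl delta_prod) auto
  finally show ?thesis .
qed

lemma cong_psd:
  assumes A: "psd m A" and fin: "finite S0"
    and g: "\<And>s i. s \<in> S0 \<Longrightarrow> i < N \<Longrightarrow> g s i < m"
    and B: "B \<in> carrier_mat N N"
    and Bij: "\<And>i j. i < N \<Longrightarrow> j < N \<Longrightarrow>
        B $$ (i,j) = (\<Sum>s\<in>S0. cnj (c s i) * A $$ (g s i, g s j) * c s j)"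
  shows "psd N B"
proof -
  have main: "qf N B f = (\<Sum>s\<in>S0. qf m A (\<lambda>x. \<Sum>i<N. if g s i = x then c s i * f i else 0))" for f
  proof -
    have "qf N B f = (\<Sum>i<N. \<Sum>j<N. \<Sum>s\<in>S0. cnj (f i) * (cnj (c s i) * A $$ (g s i, g s j) * c s j) * f j)"
      unfolding qf_def by (simp add: Bij sum_distrib_left sum_distrib_right)
    also have "\<dots> = (\<Sum>s\<in>S0. \<Sum>i<N. \<Sum>j<N. cnj (c s i * f i) * A $$ (g s i, g s j) * (c s j * f j))"
      by (subst sum.swap, rule sum.cong, simp, subst sum.swap, simp add: mult_ac)
    also have "\<dots> = (\<Sum>s\<in>S0. qf m A (\<lambda>x. \<Sum>i<N. if g s i = x then c s i * f i else 0))"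
      by (intro sum.cong refl qf_cong[symmetric] g) auto
    finally show ?thesis .
  qed
  show ?thesis unfolding psd_iff
  proof (intro conjI allI B)
    fix f
    show "Im (qf N B f) = 0" unfolding main Im_sum using A by (simp add: psd_iff)
    show "Re (qf N B f) \<ge> 0" unfolding main Re_sum using A by (auto simp: psd_iff intro: sum_nonneg)
  qed
qed

lemma psd_add: "psd d A \<Longrightarrow> psd d B \<Longrightarrow> psd d (A + B)"
proof -
  assume a: "psd d A" and b: "psd d B"
  have "qf d (A + B) f = qf d A f + qf d B f" for f
    using a b unfolding qf_def psd_iff
    by (auto simp: sum.distrib[symmetric] algebra_simps intro!: sum.cong)
  then show ?thesis using a b unfolding psd_iff by auto
qed


lemma munit_idx: "i < e \<Longrightarrow> j < e \<Longrightarrow> munit e b c $$ (i,j) = (if i = b \<and> j = c then 1 else 0)"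
  by (simp add: munit_def)

lemma ampl_carrier[simp]: "ampl S d1 d2 k A \<in> carrier_mat (d1*k) (d1*k)"
  by (simp add: ampl_def map_tensor_def)

lemma ampl_dims[simp]: "dim_row (ampl S d1 d2 k A) = d1*k" "dim_col (ampl S d1 d2 k A) = d1*k"
  by (simp_all add: ampl_def map_tensor_def)

lemma blk_carrier[simp]: "blk d e A b c \<in> carrier_mat d d"
  by (simp add: blk_def)

lemma blk_idx: "x < d \<Longrightarrow> y < d \<Longrightarrow> blk d e A b c $$ (x,y) = A $$ (x*e+b, y*e+c)"
  by (simp add: blk_def)

lemma ampl_entry:
  assumes "i < d1*k" "j < d1*k"
  shows "ampl S d1 d2 k A $$ (i,j) = S (blk d2 k A (i mod k) (j mod k)) $$ (i div k, j div k)"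
proof -
  have k: "k > 0" using assms by (cases k) auto
  have "ampl S d1 d2 k A $$ (i,j) = (\<Sum>b<k. \<Sum>c<k. S (blk d2 k A b c) $$ (i div k, j div k) *
      munit k b c $$ (i mod k, j mod k))"
    using assms by (simp add: ampl_def map_tensor_def)
  also have "\<dots> = (\<Sum>b<k. \<Sum>c<k. if i mod k = b \<and> j mod k = c then S (blk d2 k A b c) $$ (i div k, j div k) else 0)"
    using k by (intro sum.cong refl) (simp add: munit_idx)
  also have "\<dots> = S (blk d2 k A (i mod k) (j mod k)) $$ (i div k, j div k)"
    using k by (intro sum_delta2) auto
  finally show ?thesis .
qed

lemma blk_ampl:
  assumes "p < k" "q < k" "\<And>X. X \<in> carrier_mat b b \<Longrightarrow> G X \<in> carrier_mat c c"
  shows "blk c k (ampl G c b k A) p q = G (blk b k A p q)"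
proof -
  have G: "G (blk b k A p q) \<in> carrier_mat c c" using assms(3) by simp
  show ?thesis
  proof (rule eq_matI)
    fix x y assume xy: "x < dim_row (G (blk b k A p q))" "y < dim_col (G (blk b k A p q))"
    then have "x < c" "y < c" using G by auto
    moreover have "x*k+p < c*k" "y*k+q < c*k" using \<open>x<c\<close> \<open>y<c\<close> assms(1,2) by (auto intro: idx_lt)
    ultimately show "blk c k (ampl G c b k A) p q $$ (x,y) = G (blk b k A p q) $$ (x,y)"
      using assms(1,2) by (simp add: blk_idx ampl_entry)
  qed (use G in \<open>auto simp: blk_def\<close>)
qed

lemma ampl_comp:
  assumes "\<And>X. X \<in> carrier_mat b b \<Longrightarrow> G X \<in> carrier_mat c c"
  shows "ampl (\<lambda>X. F (G X)) a b k A = ampl F a c k (ampl G c b k A)"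
proof (rule eq_matI)
  fix i j assume ij: "i < dim_row (ampl F a c k (ampl G c b k A))" "j < dim_col (ampl F a c k (ampl G c b k A))"
  then have ij': "i < a*k" "j < a*k" by auto
  then have k: "k > 0" by (cases k) auto
  show "ampl (\<lambda>X. F (G X)) a b k A $$ (i,j) = ampl F a c k (ampl G c b k A) $$ (i,j)"
    using ij' k by (simp add: ampl_entry blk_ampl[OF _ _ assms])
qed auto

lemma ampl_cong:
  assumes "\<And>X. X \<in> carrier_mat d2 d2 \<Longrightarrow> S X = S' X"
  shows "ampl S d1 d2 k A = ampl S' d1 d2 k A"
  unfolding ampl_def map_tensor_def using assms by simp

lemma cb_norm_cong:
  assumes "\<And>X. X \<in> carrier_mat d2 d2 \<Longrightarrow> S X = S' X"
  shows "cb_norm S d1 d2 = cb_norm S' d1 d2"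
  unfolding cb_norm_def using ampl_cong[OF assms] by simp




lemma lin_carrier: "lin_map S d1 d2 \<Longrightarrow> A \<in> carrier_mat d2 d2 \<Longrightarrow> S A \<in> carrier_mat d1 d1"
  by (simp add: lin_map_def)

lemma lin_carrier0: "lin_map S d1 d2 \<Longrightarrow> A \<in> carrier_mat d2 d2 \<Longrightarrow> S A \<in> carrier_mat d1 d1"
  by (simp add: lin_map_def)

lemma lin_dims: "lin_map S d1 d2 \<Longrightarrow> A \<in> carrier_mat d2 d2 \<Longrightarrow> dim_row (S A) = d1 \<and> dim_col (S A) = d1"
  by (meson carrier_matD lin_carrier0)

lemma lin_add: "lin_map S d1 d2 \<Longrightarrow> A \<in> carrier_mat d2 d2 \<Longrightarrow> B \<in> carrier_mat d2 d2 \<Longrightarrow> S (A + B) = S A + S B"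
  by (simp add: lin_map_def)

lemma lin_smult: "lin_map S d1 d2 \<Longrightarrow> A \<in> carrier_mat d2 d2 \<Longrightarrow> S (z \<cdot>\<^sub>m A) = z \<cdot>\<^sub>m S A"
  by (simp add: lin_map_def)

lemma lin_zero:
  assumes "lin_map S d1 d2"
  shows "S (0\<^sub>m d2 d2) = 0\<^sub>m d1 d1"
proof -
  have "0\<^sub>m d2 d2 = (0::complex) \<cdot>\<^sub>m 0\<^sub>m d2 d2" by (rule eq_matI) auto
  then have "S (0\<^sub>m d2 d2) = 0 \<cdot>\<^sub>m S (0\<^sub>m d2 d2)"
    using lin_smult[OF assms, of "0\<^sub>m d2 d2" 0] by simp
  also have "\<dots> = 0\<^sub>m d1 d1" using lin_carrier[OF assms, of "0\<^sub>m d2 d2"] by (intro eq_matI) auto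
  finally show ?thesis .
qed

lemma lin_diff:
  assumes "lin_map S d1 d2" "A \<in> carrier_mat d2 d2" "B \<in> carrier_mat d2 d2"
  shows "S (A - B) = S A - S B"
proof -
  have "A - B = A + (-1) \<cdot>\<^sub>m B" using assms(2,3) by (intro eq_matI) auto
  then have "S (A - B) = S A + (-1) \<cdot>\<^sub>m S B"
    using assms by (simp add: lin_add lin_smult)
  also have "\<dots> = S A - S B"
    using lin_carrier[OF assms(1) assms(2)] lin_carrier[OF assms(1) assms(3)] by (intro eq_matI) auto
  finally show ?thesis .
qed

lemma divmod_iff: "q < (d::nat) \<Longrightarrow> (p*d+q = n) \<longleftrightarrow> (p = n div d \<and> q = n mod d)"
  by (metis add.commute div_mult_mod_eq div_mult_self1 div_less mod_mult_self1 mod_less add_0 less_nat_zero_code)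

lemma div_lt: "i < d*(k::nat) \<Longrightarrow> i div k < d"
  by (simp add: less_mult_imp_div_less)

lemma lin_decomp:
  assumes S: "lin_map S d1 d2" and X: "X \<in> carrier_mat d2 d2" and ij: "i < d1" "j < d1"
  shows "S X $$ (i,j) = (\<Sum>p<d2. \<Sum>q<d2. X $$ (p,q) * S (munit d2 p q) $$ (i,j))"
proof -
  define P where "P n = mat d2 d2 (\<lambda>(p,q). if p*d2+q < n then X $$ (p,q) else 0)" for n
  define cv where "cv n = (if n < d2*d2 then X $$ (n div d2, n mod d2) else 0)" for n
  have Pc: "P n \<in> carrier_mat d2 d2" for n by (simp add: P_def)
  have Mc: "munit d2 p q \<in> carrier_mat d2 d2" for p q by (simp add: munit_def)
  have step: "P (Suc n) = P n + cv n \<cdot>\<^sub>m munit d2 (n div d2) (n mod d2)" for n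
  proof (rule eq_matI)
    fix p q assume "p < dim_row (P n + cv n \<cdot>\<^sub>m munit d2 (n div d2) (n mod d2))"
      "q < dim_col (P n + cv n \<cdot>\<^sub>m munit d2 (n div d2) (n mod d2))"
    then have pq: "p < d2" "q < d2" by (auto simp: munit_def)
    have lt: "p*d2+q < d2*d2" using pq idx_lt by auto
    have e1: "P (Suc n) $$ (p,q) = (if p*d2+q < Suc n then X$$(p,q) else 0)" using pq by (simp add: P_def)
    have e2: "(P n + cv n \<cdot>\<^sub>m munit d2 (n div d2) (n mod d2)) $$ (p,q) =
       (if p*d2+q < n then X$$(p,q) else 0) + cv n * (if p = n div d2 \<and> q = n mod d2 then 1 else 0)"
      using pq by (simp add: P_def munit_idx munit_def)
    show "P (Suc n) $$ (p,q) = (P n + cv n \<cdot>\<^sub>m munit d2 (n div d2) (n mod d2)) $$ (p,q)"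
    proof (cases "p*d2+q = n")
      case True
      then have "n div d2 = p" "n mod d2 = q" using pq by auto
      then show ?thesis unfolding e1 e2 using True lt by (simp add: cv_def)
    next
      case False
      then have "\<not> (p = n div d2 \<and> q = n mod d2)" using divmod_iff[OF pq(2)] by blast
      then show ?thesis unfolding e1 e2 using False by auto
    qed
  qed (auto simp: P_def munit_def)
  have ind: "S (P n) $$ (i,j) = (\<Sum>r<n. cv r * S (munit d2 (r div d2) (r mod d2)) $$ (i,j))" for n
  proof (induct n)
    case 0
    have "P 0 = 0\<^sub>m d2 d2" by (rule eq_matI) (auto simp: P_def)
    then show ?case using lin_zero[OF S] ij by simp
  next
    case (Suc n)
    have "S (P (Suc n)) = S (P n) + cv n \<cdot>\<^sub>m S (munit d2 (n div d2) (n mod d2))"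
      unfolding step using S Pc Mc by (simp add: lin_add lin_smult)
    then show ?case using Suc ij lin_dims[OF S Mc] lin_dims[OF S Pc] by simp
  qed
  have "P (d2*d2) = X"
  proof (rule eq_matI)
    fix p q assume "p < dim_row X" "q < dim_col X"
    then have "p < d2" "q < d2" using X by auto
    then show "P (d2*d2) $$ (p,q) = X $$ (p,q)" using idx_lt by (auto simp: P_def)
  qed (use X in \<open>auto simp: P_def\<close>)
  then have "S X $$ (i,j) = (\<Sum>r<d2*d2. cv r * S (munit d2 (r div d2) (r mod d2)) $$ (i,j))"
    using ind by metis
  also have "\<dots> = (\<Sum>p<d2. \<Sum>q<d2. cv (p*d2+q) * S (munit d2 ((p*d2+q) div d2) ((p*d2+q) mod d2)) $$ (i,j))"
    by (rule sum_split)
  also have "\<dots> = (\<Sum>p<d2. \<Sum>q<d2. X $$ (p,q) * S (munit d2 p q) $$ (i,j))"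
    using idx_lt by (intro sum.cong refl) (auto simp: cv_def)
  finally show ?thesis .
qed

lemma lin_comp: "lin_map F a c \<Longrightarrow> lin_map G c b \<Longrightarrow> lin_map (\<lambda>X. F (G X)) a b"
  unfolding lin_map_def by auto

lemma channel_comp:
  assumes F: "channel F a c" and G: "channel G c b"
  shows "channel (\<lambda>X. F (G X)) a b"
proof -
  have lF: "lin_map F a c" and lG: "lin_map G c b" using F G by (auto simp: channel_def)
  have Gc: "\<And>X. X \<in> carrier_mat b b \<Longrightarrow> G X \<in> carrier_mat c c" using lin_carrier[OF lG] .
  have "psd (a*k) (ampl (\<lambda>X. F (G X)) a b k A)" if "k > 0" "psd (b*k) A" for k A
  proof -
    have "psd (c*k) (ampl G c b k A)" using G that by (auto simp: channel_def)
    then have "psd (a*k) (ampl F a c k (ampl G c b k A))" using F that by (auto simp: channel_def)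
    then show ?thesis using ampl_comp[OF Gc, where F=F and a=a and k=k and A=A] by simp
  qed
  then show ?thesis using lin_comp[OF lF lG] F G by (auto simp: channel_def)
qed

lemma sum_ind2:
  assumes "x < (d::nat)"
  shows "(\<Sum>s<d. cnj (if x = s then 1 else 0) * a * (if y = s then 1 else 0)) = (if x = y then a else (0::complex))"
proof -
  have "(\<Sum>s<d. cnj (if x = s then 1 else 0) * a * (if y = s then 1 else 0))
      = (\<Sum>s<d. if x = s then (if y = s then a else 0) else 0)" by (rule sum.cong) auto
  also have "\<dots> = (if x = y then a else 0)" using assms by (subst sum.delta') auto
  finally show ?thesis .
qed

section \<open>Specific channels\<close>

lemma blk_add: "A \<in> carrier_mat (b*e) (b*e) \<Longrightarrow> B \<in> carrier_mat (b*e) (b*e) \<Longrightarrow> p < e \<Longrightarrow> q < e \<Longrightarrow>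
  blk b e (A + B) p q = blk b e A p q + blk b e B p q"
  by (intro eq_matI) (auto simp: blk_idx idx_lt blk_def)

lemma blk_smult: "A \<in> carrier_mat (b*e) (b*e) \<Longrightarrow> p < e \<Longrightarrow> q < e \<Longrightarrow>
  blk b e (z \<cdot>\<^sub>m A) p q = z \<cdot>\<^sub>m blk b e A p q"
  by (intro eq_matI) (auto simp: blk_idx idx_lt blk_def)


definition trivD :: "nat \<Rightarrow> complex mat \<Rightarrow> complex mat" where
  "trivD d A = A $$ (0,0) \<cdot>\<^sub>m 1\<^sub>m d"

lemma channel_trivD:
  assumes "d > 0" "M > 0"
  shows "channel (trivD d) d M"
proof -
  have lin: "lin_map (trivD d) d M"
    unfolding lin_map_def trivD_def using assms by (auto intro!: eq_matI simp: algebra_simps)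
  have un: "trivD d (1\<^sub>m M) = 1\<^sub>m d" unfolding trivD_def using assms by (intro eq_matI) auto
  have "psd (d*k) (ampl (trivD d) d M k A)" if k: "k > 0" and A: "psd (M*k) A" for k A
  proof (rule cong_psd[OF A, of "{..<d}" _ "\<lambda>s i. i mod k" _ "\<lambda>s i. if i div k = s then 1 else 0"])
    fix s i assume "i < d*k"
    have "i mod k < k" using k by simp
    also have "k \<le> M*k" using assms by simp
    finally show "i mod k < M*k" .
  next
    fix i j assume ij: "i < d*k" "j < d*k"
    have "ampl (trivD d) d M k A $$ (i,j) = (if i div k = j div k then A $$ (i mod k, j mod k) else 0)"
      using ij k assms div_lt[OF ij(1)] div_lt[OF ij(2)] by (simp add: ampl_entry trivD_def blk_idx)
    then show "ampl (trivD d) d M k A $$ (i,j) = (\<Sum>s\<in>{..<d}. cnj (if i div k = s then 1 else 0) *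
         A $$ (i mod k, j mod k) * (if j div k = s then 1 else 0))"
      using sum_ind2[OF div_lt[OF ij(1)]] by simp
  qed auto
  then show ?thesis using lin un by (simp add: channel_def)
qed

definition cmpr :: "nat \<Rightarrow> complex mat \<Rightarrow> complex mat" where
  "cmpr m B = mat m m (\<lambda>(i,j). B $$ (i,j))"

lemma channel_cmpr:
  assumes "0 < m" "m \<le> M"
  shows "channel (cmpr m) m M"
proof -
  have lin: "lin_map (cmpr m) m M"
    unfolding lin_map_def cmpr_def using assms by (auto intro!: eq_matI)
  have un: "cmpr m (1\<^sub>m M) = 1\<^sub>m m" unfolding cmpr_def using assms by (intro eq_matI) auto
  have "psd (m*k) (ampl (cmpr m) m M k A)" if k: "k > 0" and A: "psd (M*k) A" for k A
  proof (rule cong_psd[OF A, of "{0::nat}" _ "\<lambda>s i. i" _ "\<lambda>s i. 1"])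
    fix s i assume "i < m*k"
    also have "m*k \<le> M*k" using assms by simp
    finally show "i < M*k" .
  next
    fix i j assume ij: "i < m*k" "j < m*k"
    have "ampl (cmpr m) m M k A $$ (i,j) = A $$ (i div k * k + i mod k, j div k * k + j mod k)"
    proof -
      have "i div k < M" "j div k < M" using div_lt[OF ij(1)] div_lt[OF ij(2)] assms by auto
      then show ?thesis using ij k div_lt[OF ij(1)] div_lt[OF ij(2)] by (simp add: ampl_entry cmpr_def blk_idx)
    qed
    then show "ampl (cmpr m) m M k A $$ (i,j) = (\<Sum>s\<in>{0}. cnj 1 * A $$ (i, j) * 1)"
      by simp
  qed auto
  then show ?thesis using lin un by (simp add: channel_def)
qed

definition ext :: "nat \<Rightarrow> nat \<Rightarrow> complex mat \<Rightarrow> complex mat" where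
  "ext M m A = mat M M (\<lambda>(x,y). (if x < m \<and> y < m then A $$ (x,y) else 0)
                         + (if x = y \<and> m \<le> x then A $$ (0,0) else 0))"

lemma channel_ext:
  assumes "0 < m" "m \<le> M"
  shows "channel (ext M m) M m"
proof -
  have lin: "lin_map (ext M m) M m"
    unfolding lin_map_def ext_def using assms by (auto intro!: eq_matI simp: algebra_simps)
  have un: "ext M m (1\<^sub>m m) = 1\<^sub>m M" unfolding ext_def using assms by (intro eq_matI) auto
  have "psd (M*k) (ampl (ext M m) M m k A)" if k: "k > 0" and A: "psd (m*k) A" for k A
  proof -
    define B1 where "B1 = mat (M*k) (M*k) (\<lambda>(i,j). if i div k < m \<and> j div k < m then A $$ (i,j) else 0)"
    define B2 where "B2 = mat (M*k) (M*k) (\<lambda>(i,j). if i div k = j div k \<and> m \<le> i div k then A $$ (i mod k, j mod k) else 0)"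
    have lt: "i < m*k" if "i div k < m" for i
    proof -
      have "i div k * k + i mod k < m*k" using that k by (intro idx_lt) auto
      then show ?thesis by simp
    qed
    have "psd (M*k) B1"
    proof (rule cong_psd[OF A, of "{0::nat}" _ "\<lambda>s i. if i div k < m then i else 0" _ "\<lambda>s i. if i div k < m then 1 else 0"])
      fix s i assume "i < M*k"
      show "(if i div k < m then i else 0) < m*k" using lt assms k by auto
    qed (auto simp: B1_def)
    moreover have "psd (M*k) B2"
    proof (rule cong_psd[OF A, of "{..<M}" _ "\<lambda>s i. i mod k" _ "\<lambda>s i. if i div k = s \<and> m \<le> s then 1 else 0"])
      fix s i assume "i < M*k"
      have "i mod k < k" using k by simp
      also have "k \<le> m*k" using assms by simp
      finally show "i mod k < m*k" .
    next
      fix i j assume ij: "i < M*k" "j < M*k"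
      have "(\<Sum>s\<in>{..<M}. cnj (if i div k = s \<and> m \<le> s then 1 else 0) * A $$ (i mod k, j mod k) * (if j div k = s \<and> m \<le> s then 1 else 0))
          = (\<Sum>s\<in>{..<M}. if i div k = s then (if j div k = s \<and> m \<le> s then A $$ (i mod k, j mod k) else 0) else 0)"
        by (rule sum.cong) auto
      also have "\<dots> = B2 $$ (i,j)" using ij div_lt[OF ij(1)] by (subst sum.delta') (auto simp: B2_def)
      finally show "B2 $$ (i,j) = (\<Sum>s\<in>{..<M}. cnj (if i div k = s \<and> m \<le> s then 1 else 0) * A $$ (i mod k, j mod k) * (if j div k = s \<and> m \<le> s then 1 else 0))" by simp
    qed (auto simp: B2_def)
    ultimately have "psd (M*k) (B1 + B2)" by (rule psd_add)
    moreover have "ampl (ext M m) M m k A = B1 + B2"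
    proof (rule eq_matI)
      fix i j assume "i < dim_row (B1 + B2)" "j < dim_col (B1 + B2)"
      then have ij: "i < M*k" "j < M*k" by (auto simp: B2_def)
      show "ampl (ext M m) M m k A $$ (i,j) = (B1 + B2) $$ (i,j)"
        using ij k div_lt[OF ij(1)] div_lt[OF ij(2)] assms
        by (simp add: ampl_entry ext_def blk_idx B1_def B2_def)
    qed (auto simp: B2_def)
    ultimately show ?thesis by simp
  qed
  then show ?thesis using lin un by (simp add: channel_def)
qed

definition lowc :: "nat \<Rightarrow> nat \<Rightarrow> complex mat \<Rightarrow> complex mat" where
  "lowc a e B = blk a e B 0 0"

lemma channel_lowc:
  assumes "0 < a" "0 < e"
  shows "channel (lowc a e) a (a*e)"
proof -
  have ix: "x*e < a*e" if "x < a" for x using idx_lt[OF that assms(2)] by simp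
  have lin: "lin_map (lowc a e) a (a*e)"
    unfolding lin_map_def lowc_def using assms by (auto simp: blk_add blk_smult)
  have un: "lowc a e (1\<^sub>m (a*e)) = 1\<^sub>m a" unfolding lowc_def using assms ix by (intro eq_matI) (auto simp: blk_idx blk_def)
  have "psd (a*k) (ampl (lowc a e) a (a*e) k A)" if k: "k > 0" and A: "psd (a*e*k) A" for k A
  proof (rule cong_psd[OF A, of "{0::nat}" _ "\<lambda>s i. (i div k)*e*k + i mod k" _ "\<lambda>s i. 1"])
    fix s i assume "i < a*k"
    then have "(i div k)*e < a*e" using ix div_lt by blast
    then show "(i div k)*e*k + i mod k < a*e*k" using k by (intro idx_lt) auto
  next
    fix i j assume ij: "i < a*k" "j < a*k"
    show "ampl (lowc a e) a (a*e) k A $$ (i,j) = (\<Sum>s\<in>{0}. cnj 1 * A $$ ((i div k)*e*k + i mod k, (j div k)*e*k + j mod k) * 1)"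
      using ij k div_lt[OF ij(1)] div_lt[OF ij(2)] ix assms by (simp add: ampl_entry lowc_def blk_idx)
  qed auto
  then show ?thesis using lin un by (simp add: channel_def)
qed

definition tens1 :: "nat \<Rightarrow> nat \<Rightarrow> complex mat \<Rightarrow> complex mat" where
  "tens1 b e X = mat (b*e) (b*e) (\<lambda>(p,q). if p mod e = q mod e then X $$ (p div e, q div e) else 0)"

lemma channel_tens1:
  assumes "0 < b" "0 < e"
  shows "channel (tens1 b e) (b*e) b"
proof -
  have lin: "lin_map (tens1 b e) (b*e) b"
    unfolding lin_map_def tens1_def using assms div_lt by (auto intro!: eq_matI)
  have un: "tens1 b e (1\<^sub>m b) = 1\<^sub>m (b*e)" unfolding tens1_def using assms div_lt
    by (intro eq_matI) (auto, metis div_mult_mod_eq)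
  have "psd (b*e*k) (ampl (tens1 b e) (b*e) b k A)" if k: "k > 0" and A: "psd (b*k) A" for k A
  proof (rule cong_psd[OF A, of "{..<e}" _ "\<lambda>s i. (i div k div e)*k + i mod k" _ "\<lambda>s i. if (i div k) mod e = s then 1 else 0"])
    fix s i assume "i < b*e*k"
    then have "i div k < b*e" using div_lt by blast
    then have "i div k div e < b" using div_lt by blast
    then show "(i div k div e)*k + i mod k < b*k" using k by (intro idx_lt) auto
  next
    fix i j assume ij: "i < b*e*k" "j < b*e*k"
    have d1: "i div k < b*e" "j div k < b*e" using ij div_lt by blast+
    have d2: "i div k div e < b" "j div k div e < b" using d1 div_lt by blast+
    have "ampl (tens1 b e) (b*e) b k A $$ (i,j) = (if (i div k) mod e = (j div k) mod e
        then A $$ ((i div k div e)*k + i mod k, (j div k div e)*k + j mod k) else 0)"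
      using ij k d1 d2 by (simp add: ampl_entry tens1_def blk_idx)
    then show "ampl (tens1 b e) (b*e) b k A $$ (i,j) = (\<Sum>s\<in>{..<e}. cnj (if (i div k) mod e = s then 1 else 0) *
         A $$ ((i div k div e)*k + i mod k, (j div k div e)*k + j mod k) * (if (j div k) mod e = s then 1 else 0))"
      using sum_ind2[of "(i div k) mod e" e] assms by simp
  qed auto
  then show ?thesis using lin un by (simp add: channel_def)
qed

lemma lin_map_tensor:
  assumes S: "lin_map S a b"
  shows "lin_map (map_tensor S a b T d1 d2) (a*d1) (b*d2)"
  unfolding lin_map_def
proof (intro conjI ballI allI)
  fix A :: "complex mat" assume "A \<in> carrier_mat (b*d2) (b*d2)"
  show "map_tensor S a b T d1 d2 A \<in> carrier_mat (a*d1) (a*d1)" by (simp add: map_tensor_def)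
next
  fix A B :: "complex mat" assume A: "A \<in> carrier_mat (b*d2) (b*d2)" and B: "B \<in> carrier_mat (b*d2) (b*d2)"
  show "map_tensor S a b T d1 d2 (A + B) = map_tensor S a b T d1 d2 A + map_tensor S a b T d1 d2 B"
  proof (rule eq_matI)
    fix i j assume "i < dim_row (map_tensor S a b T d1 d2 A + map_tensor S a b T d1 d2 B)"
      "j < dim_col (map_tensor S a b T d1 d2 A + map_tensor S a b T d1 d2 B)"
    then have ij: "i < a*d1" "j < a*d1" by (auto simp: map_tensor_def)
    then have d: "i div d1 < a" "j div d1 < a" using div_lt by blast+
    have "S (blk b d2 (A + B) \<beta> \<gamma>) $$ (i div d1, j div d1) =
          S (blk b d2 A \<beta> \<gamma>) $$ (i div d1, j div d1) + S (blk b d2 B \<beta> \<gamma>) $$ (i div d1, j div d1)"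
      if "\<beta> < d2" "\<gamma> < d2" for \<beta> \<gamma>
      using that A B d lin_dims[OF S blk_carrier]
      by (simp add: blk_add lin_add[OF S])
    then show "map_tensor S a b T d1 d2 (A + B) $$ (i,j) = (map_tensor S a b T d1 d2 A + map_tensor S a b T d1 d2 B) $$ (i,j)"
      using ij by (simp add: map_tensor_def sum.distrib[symmetric] algebra_simps)
  qed (auto simp: map_tensor_def)
next
  fix A :: "complex mat" and z assume A: "A \<in> carrier_mat (b*d2) (b*d2)"
  show "map_tensor S a b T d1 d2 (z \<cdot>\<^sub>m A) = z \<cdot>\<^sub>m map_tensor S a b T d1 d2 A"
  proof (rule eq_matI)
    fix i j assume "i < dim_row (z \<cdot>\<^sub>m map_tensor S a b T d1 d2 A)" "j < dim_col (z \<cdot>\<^sub>m map_tensor S a b T d1 d2 A)"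
    then have ij: "i < a*d1" "j < a*d1" by (auto simp: map_tensor_def)
    then have d: "i div d1 < a" "j div d1 < a" using div_lt by blast+
    have "S (blk b d2 (z \<cdot>\<^sub>m A) \<beta> \<gamma>) $$ (i div d1, j div d1) = z * S (blk b d2 A \<beta> \<gamma>) $$ (i div d1, j div d1)"
      if "\<beta> < d2" "\<gamma> < d2" for \<beta> \<gamma>
      using that A d lin_dims[OF S blk_carrier]
      by (simp add: blk_smult lin_smult[OF S])
    then show "map_tensor S a b T d1 d2 (z \<cdot>\<^sub>m A) $$ (i,j) = (z \<cdot>\<^sub>m map_tensor S a b T d1 d2 A) $$ (i,j)"
      using ij by (simp add: map_tensor_def sum_distrib_left algebra_simps)
  qed (auto simp: map_tensor_def)
qed

lemma lin_tpow: "lin_map (tpow T d1 d2 n) (d1^n) (d2^n)"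
proof (induct n)
  case 0
  then show ?case by (simp add: lin_map_def)
next
  case (Suc n)
  then show ?case using lin_map_tensor[OF Suc] by (simp add: mult.commute)
qed




lemma sum_block_le:
  assumes "\<And>r. 0 \<le> h r" "p < m"
  shows "(\<Sum>b<k. h (p*k+b)) \<le> (\<Sum>r<m*(k::nat). (h r :: real))"
proof -
  have "(\<Sum>b<k. h (p*k+b)) \<le> (\<Sum>x<m. \<Sum>b<k. h (x*k+b))"
    using assms by (intro member_le_sum[where f="\<lambda>x. \<Sum>b<k. h (x*k+b)"]) (auto intro!: sum_nonneg)
  also have "\<dots> = (\<Sum>r<m*k. h r)" by (rule sum_split[symmetric])
  finally show ?thesis .
qed

lemma sum_prefix: "n \<le> (N::nat) \<Longrightarrow> (\<Sum>j<N. if j < n then h j else 0) = (\<Sum>j<n. (h j :: 'a::comm_monoid_add))"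
proof -
  assume "n \<le> N"
  then obtain t where t: "N = n + t" using le_Suc_ex by blast
  show ?thesis unfolding t sum_lessThan_add by simp
qed

lemma sum_prefix_le: "n \<le> (N::nat) \<Longrightarrow> (\<And>j. 0 \<le> h j) \<Longrightarrow> (\<Sum>j<n. h j) \<le> (\<Sum>j<N. (h j :: real))"
  by (intro sum_mono2) auto

lemma sum_restrict_lt: "m \<le> (M::nat) \<Longrightarrow> (\<Sum>x<M. if x < m then F x else 0) = (\<Sum>x<m. (F x :: 'a::comm_monoid_add))"
  by (rule sum_prefix)

lemma sum_split_at: "m \<le> (M::nat) \<Longrightarrow> (\<Sum>x<M. F x) = (\<Sum>x<m. F x) + (\<Sum>x\<in>{m..<M}. (F x :: 'a::comm_monoid_add))"
  by (metis atLeast0LessThan sum.atLeastLessThan_concat zero_le)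

lemma nrm_sq_le1: "nrm n f \<le> 1 \<Longrightarrow> (\<Sum>i<n. (cmod (f i))\<^sup>2) \<le> 1"
  by (metis nrm_sq nrm_nonneg power_le_one one_power2)

lemma lin_minus_id:
  assumes G: "lin_map G M M"
  shows "lin_map (\<lambda>A. G A - A) M M"
  unfolding lin_map_def
proof (intro conjI ballI allI)
  fix A :: "complex mat" assume A: "A \<in> carrier_mat M M"
  then show "G A - A \<in> carrier_mat M M" by auto
next
  fix A B :: "complex mat" assume A: "A \<in> carrier_mat M M" and B: "B \<in> carrier_mat M M"
  show "G (A + B) - (A + B) = G A - A + (G B - B)"
    using A B lin_add[OF G A B] lin_carrier0[OF G A] lin_carrier0[OF G B]
    by (intro eq_matI) auto
next
  fix A :: "complex mat" and z assume A: "A \<in> carrier_mat M M"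
  show "G (z \<cdot>\<^sub>m A) - z \<cdot>\<^sub>m A = z \<cdot>\<^sub>m (G A - A)"
    using A lin_smult[OF G A] lin_carrier0[OF G A]
    by (intro eq_matI) (auto simp: algebra_simps)
qed

lemma entry_le_sum4:
  assumes "p < (d2::nat)" "q < d2" "x < d1" "y < (d1::nat)" and that: "\<And>p q x y. 0 \<le> h p q x y"
  shows "(h p q x y :: real) \<le> (\<Sum>p<d2. \<Sum>q<d2. \<Sum>x<d1. \<Sum>y<d1. h p q x y)"
proof -
  have "h p q x y \<le> (\<Sum>y<d1. h p q x y)" using assms that by (intro member_le_sum) auto
  also have "\<dots> \<le> (\<Sum>x<d1. \<Sum>y<d1. h p q x y)"
    using assms that by (intro member_le_sum[where f="\<lambda>x. \<Sum>y<d1. h p q x y"]) (auto intro!: sum_nonneg)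
  also have "\<dots> \<le> (\<Sum>q<d2. \<Sum>x<d1. \<Sum>y<d1. h p q x y)"
    using assms that by (intro member_le_sum[where f="\<lambda>q. \<Sum>x<d1. \<Sum>y<d1. h p q x y"]) (auto intro!: sum_nonneg)
  also have "\<dots> \<le> (\<Sum>p<d2. \<Sum>q<d2. \<Sum>x<d1. \<Sum>y<d1. h p q x y)"
    using assms that by (intro member_le_sum[where f="\<lambda>p. \<Sum>q<d2. \<Sum>x<d1. \<Sum>y<d1. h p q x y"]) (auto intro!: sum_nonneg)
  finally show ?thesis .
qed

lemma mv_u:
  assumes "(b::nat) < k" and that: "q < d2"
  shows "mv A (d2*k) (\<lambda>r. if r div k = q then f (y*k + r mod k) else 0) (p*k+b)
       = (\<Sum>c<k. A $$ (p*k+b, q*k+c) * f (y*k+c))"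
proof -
  have "mv A (d2*k) (\<lambda>r. if r div k = q then f (y*k + r mod k) else 0) (p*k+b)
      = (\<Sum>x<d2. \<Sum>c<k. A $$ (p*k+b, x*k+c) * (if (x*k+c) div k = q then f (y*k + (x*k+c) mod k) else 0))"
    unfolding mv_def by (rule sum_split)
  also have "\<dots> = (\<Sum>x<d2. \<Sum>c<k. if x = q then A $$ (p*k+b, q*k+c) * f (y*k+c) else 0)"
    by (intro sum.cong refl) auto
  also have "\<dots> = (\<Sum>x<d2. if x = q then (\<Sum>c<k. A $$ (p*k+b, q*k+c) * f (y*k+c)) else 0)"
    by (intro sum.cong refl) auto
  also have "\<dots> = (\<Sum>c<k. A $$ (p*k+b, q*k+c) * f (y*k+c))" using that by simp
  finally show ?thesis .
qed

lemma ampl_mv: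
  assumes F: "lin_map F d1 d2" and i: "i < d1*k"
  shows "mv (ampl F d1 d2 k A) (d1*k) f i = (\<Sum>p<d2. \<Sum>q<d2. \<Sum>y<d1. F (munit d2 p q) $$ (i div k, y) *
      mv A (d2*k) (\<lambda>r. if r div k = q then f (y*k + r mod k) else 0) (p*k + i mod k))"
proof -
  have k: "k > 0" using i by (cases k) auto
  have id: "i div k < d1" using div_lt[OF i] .
  have "mv (ampl F d1 d2 k A) (d1*k) f i = (\<Sum>j<d1*k. ampl F d1 d2 k A $$ (i,j) * f j)" by (simp add: mv_def)
  also have "\<dots> = (\<Sum>j<d1*k. (\<Sum>p<d2. \<Sum>q<d2. A $$ (p*k + i mod k, q*k + j mod k) * F (munit d2 p q) $$ (i div k, j div k)) * f j)"
  proof (intro sum.cong refl)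
    fix j assume "j \<in> {..<d1*k}"
    then have j: "j < d1*k" by simp
    have "ampl F d1 d2 k A $$ (i,j) = F (blk d2 k A (i mod k) (j mod k)) $$ (i div k, j div k)"
      using i j by (rule ampl_entry)
    also have "\<dots> = (\<Sum>p<d2. \<Sum>q<d2. blk d2 k A (i mod k) (j mod k) $$ (p,q) * F (munit d2 p q) $$ (i div k, j div k))"
      by (rule lin_decomp[OF F blk_carrier id div_lt[OF j]])
    also have "\<dots> = (\<Sum>p<d2. \<Sum>q<d2. A $$ (p*k + i mod k, q*k + j mod k) * F (munit d2 p q) $$ (i div k, j div k))"
      by (intro sum.cong refl) (simp add: blk_idx)
    finally show "ampl F d1 d2 k A $$ (i,j) * f j = (\<Sum>p<d2. \<Sum>q<d2. A $$ (p*k + i mod k, q*k + j mod k) * F (munit d2 p q) $$ (i div k, j div k)) * f j"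
      by simp
  qed
  also have "\<dots> = (\<Sum>y<d1. \<Sum>c<k. (\<Sum>p<d2. \<Sum>q<d2. A $$ (p*k + i mod k, q*k + (y*k+c) mod k) * F (munit d2 p q) $$ (i div k, (y*k+c) div k)) * f (y*k+c))"
    by (rule sum_split)
  also have "\<dots> = (\<Sum>y<d1. \<Sum>c<k. \<Sum>p<d2. \<Sum>q<d2. F (munit d2 p q) $$ (i div k, y) * (A $$ (p*k + i mod k, q*k + c) * f (y*k+c)))"
    by (intro sum.cong refl) (auto simp: sum_distrib_right sum_distrib_left mult_ac)
  also have "\<dots> = (\<Sum>p<d2. \<Sum>q<d2. \<Sum>y<d1. \<Sum>c<k. F (munit d2 p q) $$ (i div k, y) * (A $$ (p*k + i mod k, q*k + c) * f (y*k+c)))"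
    by (rule sum_swap4)
  also have "\<dots> = (\<Sum>p<d2. \<Sum>q<d2. \<Sum>y<d1. F (munit d2 p q) $$ (i div k, y) *
      mv A (d2*k) (\<lambda>r. if r div k = q then f (y*k + r mod k) else 0) (p*k + i mod k))"
    using k by (intro sum.cong refl) (simp add: mv_u sum_distrib_left)
  finally show ?thesis .
qed

lemma cb_bound:
  assumes F: "lin_map F d1 d2"
  shows "\<exists>C. \<forall>k A. k > 0 \<longrightarrow> A \<in> carrier_mat (d2*k) (d2*k) \<longrightarrow> opnorm A \<le> 1 \<longrightarrow> opnorm (ampl F d1 d2 k A) \<le> C"
proof -
  define G where "G p q = F (munit d2 p q)" for p q
  define g where "g = (\<Sum>p<d2. \<Sum>q<d2. \<Sum>x<d1. \<Sum>y<d1. cmod (G p q $$ (x,y)))"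
  have g0: "g \<ge> 0" unfolding g_def by (intro sum_nonneg) auto
  have gb: "cmod (G p q $$ (x,y)) \<le> g" if "p<d2" "q<d2" "x<d1" "y<d1" for p q x y
    unfolding g_def using that by (intro entry_le_sum4[where h="\<lambda>p q x y. cmod (G p q $$ (x,y))"]) auto
  have "opnorm (ampl F d1 d2 k A) \<le> real d2 * real d2 * real d1 * (sqrt (real d1) * g)"
    if k: "k > 0" and A: "A \<in> carrier_mat (d2*k) (d2*k)" and An: "opnorm A \<le> 1" for k A
  proof (rule opnorm_leI[OF ampl_carrier])
    fix f assume f: "nrm (d1*k) f \<le> 1"
    define u where "u q y = (\<lambda>r. if r div k = q then f (y*k + r mod k) else 0)" for q y
    define T where "T p q y = (\<lambda>i. G p q $$ (i div k, y) * mv A (d2*k) (u q y) (p*k + i mod k))" for p q y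
    have eq: "mv (ampl F d1 d2 k A) (d1*k) f i = (\<Sum>p<d2. \<Sum>q<d2. \<Sum>y<d1. T p q y i)" if "i < d1*k" for i
      unfolding T_def u_def G_def using ampl_mv[OF F that] by simp
    have nT: "nrm (d1*k) (T p q y) \<le> sqrt (real d1) * g" if pqy: "p<d2" "q<d2" "y<d1" for p q y
    proof -
      define h where "h r = (cmod (mv A (d2*k) (u q y) r))\<^sup>2" for r
      have u2: "(\<Sum>r<d2*k. (cmod (u q y r))\<^sup>2) = (\<Sum>c<k. (cmod (f (y*k+c)))\<^sup>2)"
      proof -
        have "(\<Sum>r<d2*k. (cmod (u q y r))\<^sup>2) = (\<Sum>x<d2. \<Sum>c<k. (cmod (u q y (x*k+c)))\<^sup>2)" by (rule sum_split)
        also have "\<dots> = (\<Sum>x<d2. if x = q then (\<Sum>c<k. (cmod (f (y*k+c)))\<^sup>2) else 0)"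
          by (intro sum.cong refl) (auto simp: u_def)
        also have "\<dots> = (\<Sum>c<k. (cmod (f (y*k+c)))\<^sup>2)" using pqy by simp
        finally show ?thesis .
      qed
      have "(nrm (d1*k) (T p q y))\<^sup>2 = (\<Sum>i<d1*k. (cmod (T p q y i))\<^sup>2)" by (rule nrm_sq)
      also have "\<dots> = (\<Sum>x<d1. \<Sum>b<k. (cmod (G p q $$ (x,y)))\<^sup>2 * h (p*k+b))"
        by (subst sum_split) (auto simp: T_def h_def norm_mult power_mult_distrib intro!: sum.cong)
      also have "\<dots> \<le> (\<Sum>x<d1. \<Sum>b<k. g\<^sup>2 * h (p*k+b))"
        using gb pqy g0 by (intro sum_mono mult_right_mono power_mono) (auto simp: h_def)
      also have "\<dots> = real d1 * g\<^sup>2 * (\<Sum>b<k. h (p*k+b))" by (simp add: sum_distrib_left mult.assoc)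
      also have "\<dots> \<le> real d1 * g\<^sup>2 * (\<Sum>r<d2*k. h r)"
        using pqy by (intro mult_left_mono sum_block_le) (auto simp: h_def)
      also have "\<dots> \<le> real d1 * g\<^sup>2 * (\<Sum>r<d2*k. (cmod (u q y r))\<^sup>2)"
        unfolding h_def by (intro mult_left_mono opnorm_contr_sq[OF A An]) auto
      also have "\<dots> \<le> real d1 * g\<^sup>2 * (\<Sum>j<d1*k. (cmod (f j))\<^sup>2)"
        unfolding u2 using pqy by (intro mult_left_mono sum_block_le[where h="\<lambda>j. (cmod (f j))\<^sup>2"]) auto
      also have "\<dots> \<le> real d1 * g\<^sup>2 * 1"
        using nrm_sq_le1[OF f] by (intro mult_left_mono) auto
      finally have "(nrm (d1*k) (T p q y))\<^sup>2 \<le> (sqrt (real d1) * g)\<^sup>2"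
        by (simp add: power_mult_distrib)
      then show ?thesis by (rule power2_le_imp_le) (use g0 in auto)
    qed
    have "nrm (d1*k) (mv (ampl F d1 d2 k A) (d1*k) f) = nrm (d1*k) (\<lambda>i. \<Sum>p<d2. \<Sum>q<d2. \<Sum>y<d1. T p q y i)"
      using eq by (rule nrm_cong)
    also have "\<dots> \<le> (\<Sum>p<d2. nrm (d1*k) (\<lambda>i. \<Sum>q<d2. \<Sum>y<d1. T p q y i))" by (rule nrm_sum) simp
    also have "\<dots> \<le> (\<Sum>p<d2. \<Sum>q<d2. nrm (d1*k) (\<lambda>i. \<Sum>y<d1. T p q y i))"
      by (intro sum_mono nrm_sum) simp
    also have "\<dots> \<le> (\<Sum>p<d2. \<Sum>q<d2. \<Sum>y<d1. nrm (d1*k) (T p q y))"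
      by (intro sum_mono order_trans[OF nrm_sum]) auto
    also have "\<dots> \<le> (\<Sum>p<d2. \<Sum>q<d2. \<Sum>y<d1. sqrt (real d1) * g)"
      using nT by (intro sum_mono) auto
    also have "\<dots> = real d2 * real d2 * real d1 * (sqrt (real d1) * g)" by simp
    finally show "nrm (d1*k) (mv (ampl F d1 d2 k A) (d1*k) f) \<le> real d2 * real d2 * real d1 * (sqrt (real d1) * g)" .
  qed
  then show ?thesis by blast
qed

definition cbset :: "(complex mat \<Rightarrow> complex mat) \<Rightarrow> nat \<Rightarrow> nat \<Rightarrow> real set" where
  "cbset S d1 d2 = {opnorm (ampl S d1 d2 k A) | k A. k > 0 \<and> A \<in> carrier_mat (d2*k) (d2*k) \<and> opnorm A \<le> 1}"

lemma cb_norm_cbset: "cb_norm S d1 d2 = Sup (cbset S d1 d2)"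
  by (simp add: cb_norm_def cbset_def)

lemma cbset_bdd: "lin_map S d1 d2 \<Longrightarrow> bdd_above (cbset S d1 d2)"
proof -
  assume "lin_map S d1 d2"
  from cb_bound[OF this] obtain C where C: "\<forall>k A. k > 0 \<longrightarrow> A \<in> carrier_mat (d2*k) (d2*k) \<longrightarrow> opnorm A \<le> 1 \<longrightarrow> opnorm (ampl S d1 d2 k A) \<le> C" by blast
  show ?thesis unfolding cbset_def by (rule bdd_aboveI[where M=C]) (use C in auto)
qed

lemma cbset_elem: "opnorm (ampl S d1 d2 1 (0\<^sub>m d2 d2)) \<in> cbset S d1 d2"
  unfolding cbset_def by (auto intro!: exI[of _ 1] exI[of _ "0\<^sub>m d2 d2"] simp: opnorm_zero)

lemma cb_upper:
  assumes "lin_map S d1 d2" "k > 0" "A \<in> carrier_mat (d2*k) (d2*k)" "opnorm A \<le> 1"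
  shows "opnorm (ampl S d1 d2 k A) \<le> cb_norm S d1 d2"
  unfolding cb_norm_cbset by (rule cSup_upper[OF _ cbset_bdd[OF assms(1)]]) (use assms in \<open>auto simp: cbset_def\<close>)

lemma cb_nonneg: "lin_map S d1 d2 \<Longrightarrow> cb_norm S d1 d2 \<ge> 0"
proof -
  assume S: "lin_map S d1 d2"
  have "opnorm (ampl S d1 d2 1 (0\<^sub>m d2 d2)) \<le> cb_norm S d1 d2"
    by (rule cb_upper[OF S]) (auto simp: opnorm_zero)
  moreover have "opnorm (ampl S d1 d2 1 (0\<^sub>m d2 d2)) \<ge> 0" by (rule opnorm_nonneg[OF ampl_carrier])
  ultimately show ?thesis by linarith
qed

lemma cb_least:
  assumes "\<And>k A. k > 0 \<Longrightarrow> A \<in> carrier_mat (d2*k) (d2*k) \<Longrightarrow> opnorm A \<le> 1 \<Longrightarrow> opnorm (ampl S d1 d2 k A) \<le> t"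
  shows "cb_norm S d1 d2 \<le> t"
  unfolding cb_norm_cbset using cbset_elem[of S d1 d2] assms
  by (intro cSup_least) (auto simp: cbset_def)




lemma ext_entry:
  assumes "0 < m" "m \<le> M" "i < M*k" "j < M*k"
  shows "ampl (ext M m) M m k A $$ (i,j) = (if i div k < m \<and> j div k < m then A $$ (i,j) else 0)
     + (if i div k = j div k \<and> m \<le> i div k then A $$ (i mod k, j mod k) else 0)"
  using assms div_lt[OF assms(3)] div_lt[OF assms(4)]
  by (simp add: ampl_entry ext_def blk_idx)

lemma ext_norm:
  assumes m: "0 < m" "m \<le> M" and k: "k > 0" and A: "A \<in> carrier_mat (m*k) (m*k)" and An: "opnorm A \<le> 1"
  shows "opnorm (ampl (ext M m) M m k A) \<le> 1"
proof (rule opnorm_leI[OF ampl_carrier])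
  fix f assume f: "nrm (M*k) f \<le> 1"
  define J where "J = ampl (ext M m) M m k A"
  define w where "w x = (\<lambda>r. if r < k then f (x*k + r) else 0)" for x
  have km: "k \<le> m*k" using m by simp
  have mM: "m*k \<le> M*k" using m by simp
  have v1: "mv J (M*k) f i = mv A (m*k) f i" if i: "i < M*k" "i div k < m" for i
  proof -
    have "mv J (M*k) f i = (\<Sum>j<M*k. if j div k < m then A $$ (i,j) * f j else 0)"
      unfolding mv_def J_def using i m by (intro sum.cong refl) (auto simp: ext_entry)
    also have "\<dots> = (\<Sum>x<M. \<Sum>c<k. if (x*k+c) div k < m then A $$ (i,x*k+c) * f (x*k+c) else 0)"
      by (rule sum_split)
    also have "\<dots> = (\<Sum>x<M. if x < m then (\<Sum>c<k. A $$ (i,x*k+c) * f (x*k+c)) else 0)"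
      by (intro sum.cong refl) auto
    also have "\<dots> = (\<Sum>x<m. \<Sum>c<k. A $$ (i,x*k+c) * f (x*k+c))" by (rule sum_restrict_lt[OF m(2)])
    also have "\<dots> = mv A (m*k) f i" unfolding mv_def by (rule sum_split[symmetric])
    finally show ?thesis .
  qed
  have v2: "mv J (M*k) f i = mv A (m*k) (w (i div k)) (i mod k)" if i: "i < M*k" "m \<le> i div k" for i
  proof -
    have iM: "i div k < M" using div_lt[OF i(1)] .
    have "mv J (M*k) f i = (\<Sum>j<M*k. if j div k = i div k then A $$ (i mod k, j mod k) * f j else 0)"
      unfolding mv_def J_def using i m by (intro sum.cong refl) (auto simp: ext_entry)
    also have "\<dots> = (\<Sum>x<M. \<Sum>c<k. if (x*k+c) div k = i div k then A $$ (i mod k, (x*k+c) mod k) * f (x*k+c) else 0)"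
      by (rule sum_split)
    also have "\<dots> = (\<Sum>x<M. if x = i div k then (\<Sum>c<k. A $$ (i mod k, c) * f (i div k * k + c)) else 0)"
      by (intro sum.cong refl) auto
    also have "\<dots> = (\<Sum>c<k. A $$ (i mod k, c) * f (i div k * k + c))" using iM by simp
    also have "\<dots> = (\<Sum>r<m*k. if r < k then A $$ (i mod k, r) * f (i div k * k + r) else 0)"
      by (rule sum_prefix[OF km, symmetric])
    also have "\<dots> = mv A (m*k) (w (i div k)) (i mod k)" unfolding mv_def w_def by (intro sum.cong refl) auto
    finally show ?thesis .
  qed
  have w2: "(\<Sum>r<m*k. (cmod (w x r))\<^sup>2) = (\<Sum>c<k. (cmod (f (x*k+c)))\<^sup>2)" for x
  proof -
    have "(\<Sum>r<m*k. (cmod (w x r))\<^sup>2) = (\<Sum>r<m*k. if r < k then (cmod (f (x*k+r)))\<^sup>2 else 0)"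
      unfolding w_def by (intro sum.cong refl) auto
    also have "\<dots> = (\<Sum>c<k. (cmod (f (x*k+c)))\<^sup>2)" by (rule sum_prefix[OF km])
    finally show ?thesis .
  qed
  have "(\<Sum>i<M*k. (cmod (mv J (M*k) f i))\<^sup>2) = (\<Sum>x<M. \<Sum>b<k. (cmod (mv J (M*k) f (x*k+b)))\<^sup>2)"
    by (rule sum_split)
  also have "\<dots> = (\<Sum>x<m. \<Sum>b<k. (cmod (mv J (M*k) f (x*k+b)))\<^sup>2) + (\<Sum>x\<in>{m..<M}. \<Sum>b<k. (cmod (mv J (M*k) f (x*k+b)))\<^sup>2)"
    by (rule sum_split_at[OF m(2)])
  also have "(\<Sum>x<m. \<Sum>b<k. (cmod (mv J (M*k) f (x*k+b)))\<^sup>2) = (\<Sum>x<m. \<Sum>b<k. (cmod (mv A (m*k) f (x*k+b)))\<^sup>2)"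
  proof (intro sum.cong refl)
    fix x b assume "x \<in> {..<m}" "b \<in> {..<k}"
    then have "x*k+b < M*k" "(x*k+b) div k < m" using idx_lt[of x M b k] m by auto
    then show "(cmod (mv J (M*k) f (x*k+b)))\<^sup>2 = (cmod (mv A (m*k) f (x*k+b)))\<^sup>2" using v1 by simp
  qed
  also have "\<dots> = (\<Sum>i<m*k. (cmod (mv A (m*k) f i))\<^sup>2)" by (rule sum_split[symmetric])
  also have "(\<Sum>x\<in>{m..<M}. \<Sum>b<k. (cmod (mv J (M*k) f (x*k+b)))\<^sup>2) = (\<Sum>x\<in>{m..<M}. \<Sum>b<k. (cmod (mv A (m*k) (w x) b))\<^sup>2)"
  proof (intro sum.cong refl)
    fix x b assume "x \<in> {m..<M}" "b \<in> {..<k}"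
    then have "x*k+b < M*k" "m \<le> (x*k+b) div k" "(x*k+b) div k = x" "(x*k+b) mod k = b" using idx_lt[of x M b k] by auto
    then show "(cmod (mv J (M*k) f (x*k+b)))\<^sup>2 = (cmod (mv A (m*k) (w x) b))\<^sup>2" using v2 by metis
  qed
  also have "(\<Sum>i<m*k. (cmod (mv A (m*k) f i))\<^sup>2) + (\<Sum>x\<in>{m..<M}. \<Sum>b<k. (cmod (mv A (m*k) (w x) b))\<^sup>2)
      \<le> (\<Sum>j<m*k. (cmod (f j))\<^sup>2) + (\<Sum>x\<in>{m..<M}. \<Sum>c<k. (cmod (f (x*k+c)))\<^sup>2)"
  proof (rule add_mono)
    show "(\<Sum>i<m*k. (cmod (mv A (m*k) f i))\<^sup>2) \<le> (\<Sum>j<m*k. (cmod (f j))\<^sup>2)"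
      by (rule opnorm_contr_sq[OF A An])
    show "(\<Sum>x\<in>{m..<M}. \<Sum>b<k. (cmod (mv A (m*k) (w x) b))\<^sup>2) \<le> (\<Sum>x\<in>{m..<M}. \<Sum>c<k. (cmod (f (x*k+c)))\<^sup>2)"
    proof (rule sum_mono)
      fix x
      have "(\<Sum>b<k. (cmod (mv A (m*k) (w x) b))\<^sup>2) \<le> (\<Sum>r<m*k. (cmod (mv A (m*k) (w x) r))\<^sup>2)"
        by (rule sum_prefix_le[OF km]) simp
      also have "\<dots> \<le> (\<Sum>r<m*k. (cmod (w x r))\<^sup>2)" by (rule opnorm_contr_sq[OF A An])
      finally show "(\<Sum>b<k. (cmod (mv A (m*k) (w x) b))\<^sup>2) \<le> (\<Sum>c<k. (cmod (f (x*k+c)))\<^sup>2)" unfolding w2 .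
    qed
  qed
  also have "(\<Sum>j<m*k. (cmod (f j))\<^sup>2) = (\<Sum>x<m. \<Sum>c<k. (cmod (f (x*k+c)))\<^sup>2)" by (rule sum_split)
  also have "(\<Sum>x<m. \<Sum>c<k. (cmod (f (x*k+c)))\<^sup>2) + (\<Sum>x\<in>{m..<M}. \<Sum>c<k. (cmod (f (x*k+c)))\<^sup>2)
     = (\<Sum>x<M. \<Sum>c<k. (cmod (f (x*k+c)))\<^sup>2)" by (rule sum_split_at[OF m(2), symmetric])
  also have "\<dots> = (\<Sum>j<M*k. (cmod (f j))\<^sup>2)" by (rule sum_split[symmetric])
  also have "\<dots> \<le> 1" by (rule nrm_sq_le1[OF f])
  finally have "(\<Sum>i<M*k. (cmod (mv J (M*k) f i))\<^sup>2) \<le> 1" .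
  then show "nrm (M*k) (mv (ampl (ext M m) M m k A) (M*k) f) \<le> 1"
    unfolding J_def[symmetric] nrm_def by simp
qed

lemma cmpr_norm:
  assumes mM: "m \<le> M" and X: "X \<in> carrier_mat (M*k) (M*k)"
  shows "opnorm (ampl (cmpr m) m M k X) \<le> opnorm X"
proof (rule opnorm_leI[OF ampl_carrier])
  fix f assume f: "nrm (m*k) f \<le> 1"
  define f' where "f' j = (if j < m*k then f j else 0)" for j
  have le: "m*k \<le> M*k" using mM by simp
  have ent: "ampl (cmpr m) m M k X $$ (i,j) = X $$ (i,j)" if "i < m*k" "j < m*k" for i j
  proof -
    have "i div k < M" "j div k < M" using div_lt[OF that(1)] div_lt[OF that(2)] mM by auto
    then show ?thesis using that div_lt[OF that(1)] div_lt[OF that(2)] by (simp add: ampl_entry cmpr_def blk_idx)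
  qed
  have mvq: "mv (ampl (cmpr m) m M k X) (m*k) f i = mv X (M*k) f' i" if "i < m*k" for i
  proof -
    have "mv (ampl (cmpr m) m M k X) (m*k) f i = (\<Sum>j<m*k. X $$ (i,j) * f j)"
      unfolding mv_def using that ent by (intro sum.cong refl) auto
    also have "\<dots> = (\<Sum>j<M*k. if j < m*k then X $$ (i,j) * f j else 0)" by (rule sum_prefix[OF le, symmetric])
    also have "\<dots> = mv X (M*k) f' i" unfolding mv_def f'_def by (intro sum.cong refl) auto
    finally show ?thesis .
  qed
  have nf': "nrm (M*k) f' = nrm (m*k) f"
  proof -
    have "(\<Sum>j<M*k. (cmod (f' j))\<^sup>2) = (\<Sum>j<M*k. if j < m*k then (cmod (f j))\<^sup>2 else 0)"
      unfolding f'_def by (intro sum.cong refl) auto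
    also have "\<dots> = (\<Sum>j<m*k. (cmod (f j))\<^sup>2)" by (rule sum_prefix[OF le])
    finally show ?thesis unfolding nrm_def by simp
  qed
  have "nrm (m*k) (mv (ampl (cmpr m) m M k X) (m*k) f) = nrm (m*k) (mv X (M*k) f')"
    using mvq by (rule nrm_cong)
  also have "\<dots> \<le> nrm (M*k) (mv X (M*k) f')"
    by (rule nrm_le_sq, rule sum_prefix_le[OF le]) simp
  also have "\<dots> \<le> opnorm X" using nf' f by (intro opnorm_upper[OF X]) simp
  finally show "nrm (m*k) (mv (ampl (cmpr m) m M k X) (m*k) f) \<le> opnorm X" .
qed

section \<open>Delta\<close>

definition dset :: "(complex mat \<Rightarrow> complex mat) \<Rightarrow> nat \<Rightarrow> nat \<Rightarrow> nat \<Rightarrow> real set" where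
  "dset S d1 d2 M = {cb_norm (\<lambda>A. E (S (D A)) - A) M M | E D. channel D d2 M \<and> channel E M d1}"

lemma Delta_dset: "Delta S d1 d2 M = Inf (dset S d1 d2 M)"
  by (simp add: Delta_def dset_def)

lemma channel_lin: "channel T d1 d2 \<Longrightarrow> lin_map T d1 d2"
  by (simp add: channel_def)

lemma dset_nonneg:
  assumes S: "lin_map S d1 d2" and x: "x \<in> dset S d1 d2 M"
  shows "x \<ge> 0"
proof -
  obtain E D where ED: "x = cb_norm (\<lambda>A. E (S (D A)) - A) M M" "channel D d2 M" "channel E M d1"
    using x unfolding dset_def by auto
  have "lin_map (\<lambda>A. E (S (D A)) - A) M M"
    using lin_minus_id[OF lin_comp[OF channel_lin[OF ED(3)] lin_comp[OF S channel_lin[OF ED(2)]]]] .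
  then show ?thesis using ED(1) cb_nonneg by simp
qed

lemma dset_ne:
  assumes "d1 > 0" "d2 > 0" "M > 0"
  shows "dset S d1 d2 M \<noteq> {}"
  using channel_trivD[of d2 M] channel_trivD[of M d1] assms unfolding dset_def by blast

lemma Delta_nonneg:
  assumes "lin_map S d1 d2" "d1 > 0" "d2 > 0" "M > 0"
  shows "Delta S d1 d2 M \<ge> 0"
  unfolding Delta_dset using dset_ne[OF assms(2-4)] dset_nonneg[OF assms(1)]
  by (intro cInf_greatest) auto

lemma dset_bdd: "lin_map S d1 d2 \<Longrightarrow> bdd_below (dset S d1 d2 M)"
  using dset_nonneg by (intro bdd_belowI[where m=0]) blast

lemma blk_tens1:
  assumes "\<beta> < e" "\<gamma> < e"
  shows "blk b e (tens1 b e X) \<beta> \<gamma> = (if \<beta> = \<gamma> then mat b b (\<lambda>(p,q). X $$ (p,q)) else 0\<^sub>m b b)"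
proof (rule eq_matI)
  fix p q assume pq: "p < dim_row (if \<beta> = \<gamma> then mat b b (\<lambda>(p,q). X $$ (p,q)) else 0\<^sub>m b b)"
     "q < dim_col (if \<beta> = \<gamma> then mat b b (\<lambda>(p,q). X $$ (p,q)) else 0\<^sub>m b b)"
  then have pq': "p < b" "q < b" by (auto split: if_splits)
  then show "blk b e (tens1 b e X) \<beta> \<gamma> $$ (p,q) = (if \<beta> = \<gamma> then mat b b (\<lambda>(p,q). X $$ (p,q)) else 0\<^sub>m b b) $$ (p,q)"
    using assms idx_lt[OF pq'(1) assms(1)] idx_lt[OF pq'(2) assms(2)]
    by (simp add: blk_idx tens1_def)
qed (auto simp: blk_def)

lemma mat_self: "X \<in> carrier_mat b b \<Longrightarrow> mat b b (\<lambda>(p,q). X $$ (p,q)) = X"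
  by (intro eq_matI) auto

lemma mat_self2: "X \<in> carrier_mat b b \<Longrightarrow> mat b b (($$) X) = X"
  by (intro eq_matI) auto

lemma unit_trace:
  assumes T: "channel T d1 d2" and "d1 > 0"
  shows "(\<Sum>\<beta><d2. T (munit d2 \<beta> \<beta>) $$ (0,0)) = 1"
proof -
  have "1 = T (1\<^sub>m d2) $$ (0,0)" using T assms(2) by (simp add: channel_def)
  also have "\<dots> = (\<Sum>p<d2. \<Sum>q<d2. 1\<^sub>m d2 $$ (p,q) * T (munit d2 p q) $$ (0,0))"
    using assms by (intro lin_decomp[OF channel_lin[OF T]]) auto
  also have "\<dots> = (\<Sum>p<d2. \<Sum>q<d2. if p = q then T (munit d2 p q) $$ (0,0) else 0)"
    by (intro sum.cong refl) auto
  also have "\<dots> = (\<Sum>\<beta><d2. T (munit d2 \<beta> \<beta>) $$ (0,0))" by simp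
  finally show ?thesis by simp
qed

lemma key_tensor:
  assumes S: "lin_map S a b" and T: "channel T d1 d2" and pos: "0 < a" "0 < b" "0 < d1" "0 < d2"
    and X: "X \<in> carrier_mat b b"
  shows "lowc a d1 (map_tensor S a b T d1 d2 (tens1 b d2 X)) = S X"
proof (rule eq_matI)
  have SX: "S X \<in> carrier_mat a a" using lin_carrier0[OF S X] .
  fix x y assume "x < dim_row (S X)" "y < dim_col (S X)"
  then have xy: "x < a" "y < a" using SX by auto
  have ix: "x*d1 < a*d1" "y*d1 < a*d1" using idx_lt[OF xy(1) pos(3)] idx_lt[OF xy(2) pos(3)] by auto
  have "lowc a d1 (map_tensor S a b T d1 d2 (tens1 b d2 X)) $$ (x,y)
      = map_tensor S a b T d1 d2 (tens1 b d2 X) $$ (x*d1, y*d1)"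
    using xy by (simp add: lowc_def blk_idx)
  also have "\<dots> = (\<Sum>\<beta><d2. \<Sum>\<gamma><d2. S (blk b d2 (tens1 b d2 X) \<beta> \<gamma>) $$ (x, y) * T (munit d2 \<beta> \<gamma>) $$ (0, 0))"
    using ix pos by (simp add: map_tensor_def)
  also have "\<dots> = (\<Sum>\<beta><d2. \<Sum>\<gamma><d2. if \<beta> = \<gamma> then S X $$ (x,y) * T (munit d2 \<beta> \<gamma>) $$ (0, 0) else 0)"
    using xy X lin_zero[OF S] by (intro sum.cong refl) (auto simp: blk_tens1 mat_self mat_self2)
  also have "\<dots> = (\<Sum>\<beta><d2. S X $$ (x,y) * T (munit d2 \<beta> \<beta>) $$ (0, 0))" by simp
  also have "\<dots> = S X $$ (x,y)" using unit_trace[OF T pos(3)] by (simp add: sum_distrib_left[symmetric])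
  finally show "lowc a d1 (map_tensor S a b T d1 d2 (tens1 b d2 X)) $$ (x,y) = S X $$ (x,y)" .
qed (auto simp: lowc_def blk_def lin_dims[OF S X])

lemma Delta_step:
  assumes S: "lin_map S a b" and T: "channel T d1 d2" and pos: "0 < a" "0 < b" "0 < d1" "0 < d2" "0 < M"
  shows "Delta (map_tensor S a b T d1 d2) (a*d1) (b*d2) M \<le> Delta S a b M"
  unfolding Delta_dset
proof (rule cInf_mono[OF dset_ne[OF pos(1,2,5)] dset_bdd[OF lin_map_tensor[OF S]]])
  fix x assume "x \<in> dset S a b M"
  then obtain E D where ED: "x = cb_norm (\<lambda>A. E (S (D A)) - A) M M" "channel D b M" "channel E M a"
    unfolding dset_def by auto
  define D' where "D' = (\<lambda>X. tens1 b d2 (D X))"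
  define E' where "E' = (\<lambda>Y. E (lowc a d1 Y))"
  have D': "channel D' (b*d2) M" unfolding D'_def by (rule channel_comp[OF channel_tens1[OF pos(2,4)] ED(2)])
  have E': "channel E' M (a*d1)" unfolding E'_def by (rule channel_comp[OF ED(3) channel_lowc[OF pos(1,3)]])
  have "cb_norm (\<lambda>A. E' (map_tensor S a b T d1 d2 (D' A)) - A) M M = x"
    unfolding ED(1)
  proof (rule cb_norm_cong)
    fix A :: "complex mat" assume "A \<in> carrier_mat M M"
    then have "D A \<in> carrier_mat b b" using lin_carrier0[OF channel_lin[OF ED(2)]] by blast
    then show "E' (map_tensor S a b T d1 d2 (D' A)) - A = E (S (D A)) - A"
      unfolding E'_def D'_def using key_tensor[OF S T pos(1-4)] by simp
  qed
  moreover have "cb_norm (\<lambda>A. E' (map_tensor S a b T d1 d2 (D' A)) - A) M M \<in> dset (map_tensor S a b T d1 d2) (a*d1) (b*d2) M"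
    unfolding dset_def using D' E' by blast
  ultimately show "\<exists>y\<in>dset (map_tensor S a b T d1 d2) (a*d1) (b*d2) M. y \<le> x" by force
qed

lemma cmpr_ext: "A \<in> carrier_mat m m \<Longrightarrow> m \<le> M \<Longrightarrow> cmpr m (ext M m A) = A"
  by (intro eq_matI) (auto simp: cmpr_def ext_def)

lemma Delta_mono:
  assumes S: "lin_map S a b" and pos: "0 < a" "0 < b" "0 < m" "m \<le> M"
  shows "Delta S a b m \<le> Delta S a b M"
  unfolding Delta_dset
proof (rule cInf_mono[OF dset_ne dset_bdd[OF S]])
  show "0 < a" "0 < b" "0 < M" using pos by auto
  fix x assume "x \<in> dset S a b M"
  then obtain E D where ED: "x = cb_norm (\<lambda>A. E (S (D A)) - A) M M" "channel D b M" "channel E M a"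
    unfolding dset_def by auto
  define F where "F = (\<lambda>A. E (S (D A)) - A)"
  have lF: "lin_map F M M" unfolding F_def
    using lin_minus_id[OF lin_comp[OF channel_lin[OF ED(3)] lin_comp[OF S channel_lin[OF ED(2)]]]] .
  have lC: "lin_map (cmpr m) m M" using channel_lin[OF channel_cmpr[OF pos(3,4)]] .
  have lX: "lin_map (ext M m) M m" using channel_lin[OF channel_ext[OF pos(3,4)]] .
  define D' where "D' = (\<lambda>X. D (ext M m X))"
  define E' where "E' = (\<lambda>Y. cmpr m (E Y))"
  have D': "channel D' b m" unfolding D'_def by (rule channel_comp[OF ED(2) channel_ext[OF pos(3,4)]])
  have E': "channel E' m a" unfolding E'_def by (rule channel_comp[OF channel_cmpr[OF pos(3,4)] ED(3)])
  have "cb_norm (\<lambda>A. E' (S (D' A)) - A) m m = cb_norm (\<lambda>A. cmpr m (F (ext M m A))) m m"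
  proof (rule cb_norm_cong)
    fix A :: "complex mat" assume A: "A \<in> carrier_mat m m"
    have eA: "ext M m A \<in> carrier_mat M M" using lin_carrier0[OF lX A] .
    have "E (S (D (ext M m A))) \<in> carrier_mat M M"
      using lin_carrier0[OF lin_comp[OF channel_lin[OF ED(3)] lin_comp[OF S channel_lin[OF ED(2)]]] eA] .
    then have "cmpr m (F (ext M m A)) = cmpr m (E (S (D (ext M m A)))) - cmpr m (ext M m A)"
      unfolding F_def using lin_diff[OF lC _ eA] by blast
    then show "E' (S (D' A)) - A = cmpr m (F (ext M m A))"
      unfolding E'_def D'_def using cmpr_ext[OF A pos(4)] by simp
  qed
  also have "\<dots> \<le> cb_norm F M M"
  proof (rule cb_least)
    fix k A assume k: "k > 0" and A: "A \<in> carrier_mat (m*k) (m*k)" and An: "opnorm A \<le> 1"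
    have c1: "\<And>X. X \<in> carrier_mat m m \<Longrightarrow> F (ext M m X) \<in> carrier_mat M M"
      using lin_carrier0[OF lF] lin_carrier0[OF lX] by blast
    have c2: "\<And>X. X \<in> carrier_mat m m \<Longrightarrow> ext M m X \<in> carrier_mat M M"
      using lin_carrier0[OF lX] by blast
    have "ampl (\<lambda>A. cmpr m (F (ext M m A))) m m k A = ampl (cmpr m) m M k (ampl (\<lambda>A. F (ext M m A)) M m k A)"
      by (rule ampl_comp[OF c1])
    also have "\<dots> = ampl (cmpr m) m M k (ampl F M M k (ampl (ext M m) M m k A))"
      by (simp add: ampl_comp[OF c2, where F=F])
    finally have eq: "ampl (\<lambda>A. cmpr m (F (ext M m A))) m m k A = ampl (cmpr m) m M k (ampl F M M k (ampl (ext M m) M m k A))" .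
    have "opnorm (ampl (cmpr m) m M k (ampl F M M k (ampl (ext M m) M m k A))) \<le> opnorm (ampl F M M k (ampl (ext M m) M m k A))"
      by (rule cmpr_norm[OF pos(4) ampl_carrier])
    also have "\<dots> \<le> cb_norm F M M"
      by (rule cb_upper[OF lF k ampl_carrier ext_norm[OF pos(3,4) k A An]])
    finally show "opnorm (ampl (\<lambda>A. cmpr m (F (ext M m A))) m m k A) \<le> cb_norm F M M" unfolding eq .
  qed
  finally have le: "cb_norm (\<lambda>A. E' (S (D' A)) - A) m m \<le> x" unfolding ED(1) F_def .
  moreover have "cb_norm (\<lambda>A. E' (S (D' A)) - A) m m \<in> dset S a b m"
    unfolding dset_def using D' E' by blast
  ultimately show "\<exists>y\<in>dset S a b m. y \<le> x" by blast
qed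

section \<open>Tensor powers\<close>

lemma DeltaPow_nonneg:
  assumes "d1 > 0" "d2 > 0" "M > 0"
  shows "DeltaPow T d1 d2 n M \<ge> 0"
  unfolding DeltaPow_def using assms by (intro Delta_nonneg lin_tpow) auto

lemma DeltaPow_Suc:
  assumes T: "channel T d1 d2" and pos: "d1 > 0" "d2 > 0" "M > 0"
  shows "DeltaPow T d1 d2 (Suc n) M \<le> DeltaPow T d1 d2 n M"
proof -
  have "DeltaPow T d1 d2 (Suc n) M = Delta (map_tensor (tpow T d1 d2 n) (d1^n) (d2^n) T d1 d2) (d1^n*d1) (d2^n*d2) M"
    by (simp add: DeltaPow_def mult.commute)
  also have "\<dots> \<le> Delta (tpow T d1 d2 n) (d1^n) (d2^n) M"
    using pos by (intro Delta_step[OF lin_tpow T]) auto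
  finally show ?thesis by (simp add: DeltaPow_def)
qed

lemma DeltaPow_mono_n:
  assumes T: "channel T d1 d2" and pos: "d1 > 0" "d2 > 0" "M > 0" and le: "n \<le> n'"
  shows "DeltaPow T d1 d2 n' M \<le> DeltaPow T d1 d2 n M"
  using le
proof (induct n' rule: dec_induct)
  case (step n')
  then show ?case using DeltaPow_Suc[OF T pos, of n'] by linarith
qed simp

lemma DeltaPow_mono_M:
  assumes "d1 > 0" "d2 > 0" "0 < m" "m \<le> M"
  shows "DeltaPow T d1 d2 n m \<le> DeltaPow T d1 d2 n M"
  unfolding DeltaPow_def using assms by (intro Delta_mono lin_tpow) auto




lemma core:
  fixes n M :: "nat \<Rightarrow> nat" and c :: real
  assumes smono: "strict_mono n" and npos: "\<forall>a. n a > 0"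
    and ratio: "(\<lambda>a. real (n (Suc a)) / real (n a)) \<longlonglongrightarrow> 1"
    and Mpos: "\<forall>a. M a > 0" and c0: "c \<ge> 0"
    and cL: "ereal c < liminf (\<lambda>a. ereal (log 2 (real (M a)) / real (n a)))"
  shows "\<exists>\<alpha> K. filterlim \<alpha> at_top sequentially \<and> ((\<lambda>k. real (n (\<alpha> k)) / real k) \<longlonglongrightarrow> 1) \<and>
     (\<forall>k\<ge>K. n (\<alpha> k) \<le> k \<and> nat \<lfloor>2 powr (c * real k)\<rfloor> \<le> M (\<alpha> k) \<and> 0 < nat \<lfloor>2 powr (c * real k)\<rfloor>)"
proof -
  obtain c' where c': "ereal c < ereal c'" "ereal c' < liminf (\<lambda>a. ereal (log 2 (real (M a)) / real (n a)))"
    using ereal_dense2[OF cL] by blast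
  have cc': "c < c'" using c'(1) by simp
  have ev1: "\<forall>\<^sub>F a in sequentially. ereal c' < ereal (log 2 (real (M a)) / real (n a))"
    by (rule less_LiminfD[OF c'(2)])
  have "(\<lambda>a. c * (real (n (Suc a)) / real (n a))) \<longlonglongrightarrow> c * 1"
    by (intro tendsto_mult tendsto_const ratio)
  then have ev2: "\<forall>\<^sub>F a in sequentially. c * (real (n (Suc a)) / real (n a)) < c'"
    using cc' by (intro order_tendstoD(2)) auto
  obtain A0 where A0: "\<And>a. a \<ge> A0 \<Longrightarrow> ereal c' < ereal (log 2 (real (M a)) / real (n a)) \<and> c * (real (n (Suc a)) / real (n a)) < c'"
    using eventually_conj[OF ev1 ev2] unfolding eventually_sequentially by blast
  define \<alpha> where "\<alpha> k = Max {a. n a \<le> k}" for k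
  have fin: "finite {a. n a \<le> k}" for k
  proof (rule finite_subset[of _ "{..k}"])
    show "{a. n a \<le> k} \<subseteq> {..k}" using seq_suble[OF smono] by (auto intro: le_trans)
  qed simp
  have props: "n (\<alpha> k) \<le> k \<and> k < n (Suc (\<alpha> k)) \<and> (\<forall>a. n a \<le> k \<longrightarrow> a \<le> \<alpha> k)" if k: "n 0 \<le> k" for k
  proof -
    have ne: "{a. n a \<le> k} \<noteq> {}" using k by auto
    have "\<alpha> k \<in> {a. n a \<le> k}" unfolding \<alpha>_def using Max_in[OF fin ne] .
    moreover have ge: "\<forall>a. n a \<le> k \<longrightarrow> a \<le> \<alpha> k" unfolding \<alpha>_def using Max_ge[OF fin] by auto
    moreover have "k < n (Suc (\<alpha> k))"
    proof (rule ccontr)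
      assume "\<not> k < n (Suc (\<alpha> k))"
      then have "Suc (\<alpha> k) \<le> \<alpha> k" using ge by auto
      then show False by simp
    qed
    ultimately show ?thesis by auto
  qed
  have n0: "n 0 \<le> n a" for a using strict_mono_less_eq[OF smono] by simp
  have lim\<alpha>: "filterlim \<alpha> at_top sequentially"
    unfolding filterlim_at_top eventually_sequentially
  proof
    fix Z show "\<exists>N. \<forall>k\<ge>N. Z \<le> \<alpha> k"
      using props n0 by (intro exI[of _ "n Z"]) (metis le_trans)
  qed
  have rinv: "(\<lambda>a. real (n a) / real (n (Suc a))) \<longlonglongrightarrow> 1"
  proof -
    have "(\<lambda>a. inverse (real (n (Suc a)) / real (n a))) \<longlonglongrightarrow> inverse 1"
      by (intro tendsto_inverse ratio) simp
    then show ?thesis by simp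
  qed
  have r\<alpha>: "(\<lambda>k. real (n (\<alpha> k)) / real k) \<longlonglongrightarrow> 1"
  proof (rule tendsto_sandwich[of "\<lambda>k. real (n (\<alpha> k)) / real (n (Suc (\<alpha> k)))" _ _ "\<lambda>_. 1"])
    show "\<forall>\<^sub>F k in sequentially. real (n (\<alpha> k)) / real (n (Suc (\<alpha> k))) \<le> real (n (\<alpha> k)) / real k"
      unfolding eventually_sequentially
    proof (intro exI[of _ "n 0"] allI impI)
      fix k assume k: "n 0 \<le> k"
      then have "0 < k" using npos by (metis gr0I le_zero_eq)
      then show "real (n (\<alpha> k)) / real (n (Suc (\<alpha> k))) \<le> real (n (\<alpha> k)) / real k"
        using props[OF k] by (intro divide_left_mono) auto
    qed
    show "\<forall>\<^sub>F k in sequentially. real (n (\<alpha> k)) / real k \<le> 1"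
      unfolding eventually_sequentially
    proof (intro exI[of _ "n 0"] allI impI)
      fix k assume k: "n 0 \<le> k"
      then have "0 < k" using npos by (metis gr0I le_zero_eq)
      then show "real (n (\<alpha> k)) / real k \<le> 1" using props[OF k] by simp
    qed
    show "(\<lambda>k. real (n (\<alpha> k)) / real (n (Suc (\<alpha> k)))) \<longlonglongrightarrow> 1"
      using filterlim_compose[OF rinv lim\<alpha>] .
  qed simp
  have main: "n (\<alpha> k) \<le> k \<and> nat \<lfloor>2 powr (c * real k)\<rfloor> \<le> M (\<alpha> k) \<and> 0 < nat \<lfloor>2 powr (c * real k)\<rfloor>"
    if k: "k \<ge> n A0" for k
  proof -
    have k0: "n 0 \<le> k" using k n0 le_trans by blast
    define a where "a = \<alpha> k"
    have aA: "A0 \<le> a" unfolding a_def using props[OF k0] k by auto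
    have na: "n a \<le> k" "k < n (Suc a)" using props[OF k0] unfolding a_def by auto
    have nap: "real (n a) > 0" using npos by simp
    have "c * real k \<le> c * real (n (Suc a))" using na c0 by (intro mult_left_mono) auto
    also have "c * real (n (Suc a)) < c' * real (n a)"
    proof -
      have "c * (real (n (Suc a)) / real (n a)) < c'" using A0[OF aA] by simp
      then show ?thesis using nap by (simp add: field_simps)
    qed
    also have "c' * real (n a) < log 2 (real (M a))"
    proof -
      have "c' < log 2 (real (M a)) / real (n a)" using A0[OF aA] by simp
      then show ?thesis using nap by (simp add: field_simps)
    qed
    finally have "2 powr (c * real k) < real (M a)" using Mpos by (subst less_log_iff[symmetric]) auto
    then have "\<lfloor>2 powr (c * real k)\<rfloor> < int (M a)" by (simp add: floor_less_iff)
    then have le: "nat \<lfloor>2 powr (c * real k)\<rfloor> \<le> M a" by (simp add: nat_le_iff)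
    have "1 \<le> 2 powr (c * real k)" using c0 by (intro ge_one_powr_ge_zero) auto
    then have "1 \<le> \<lfloor>2 powr (c * real k)\<rfloor>" by (simp add: one_le_floor)
    then have "0 < nat \<lfloor>2 powr (c * real k)\<rfloor>" by simp
    then show ?thesis using le na unfolding a_def by simp
  qed
  show ?thesis using lim\<alpha> r\<alpha> main by blast
qed

theorem lemma1:
  fixes T :: "complex mat \<Rightarrow> complex mat" and d1 d2 :: nat
    and n :: "nat \<Rightarrow> nat" and M :: "nat \<Rightarrow> nat"
  assumes "d1 > 0" and "d2 > 0"
    and "channel T d1 d2"
    and "strict_mono n" and "\<forall>a. n a > 0"
    and "(\<lambda>a. real (n (Suc a)) / real (n a)) \<longlonglongrightarrow> 1"
    and "\<forall>a. M a > 0"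
    and "(\<lambda>a. DeltaPow T d1 d2 (n a) (M a)) \<longlonglongrightarrow> 0"
  shows "(\<forall>c\<ge>0. ereal c < liminf (\<lambda>a. ereal (log 2 (real (M a)) / real (n a)))
            \<longrightarrow> achievable T d1 d2 c)
       \<and> (\<forall>\<mu> lam. \<mu> \<ge> 0 \<and> lam \<ge> 0 \<and>
            (\<forall>a. DeltaPow T d1 d2 (n a) (M a) \<le> \<mu> * exp (- lam * real (n a))) \<longrightarrow>
            (\<forall>c\<ge>0. ereal c < liminf (\<lambda>a. ereal (log 2 (real (M a)) / real (n a))) \<longrightarrow>
               liminf (\<lambda>k. neglog_rate k (DeltaPow T d1 d2 k (nat \<lfloor>2 powr (c * real k)\<rfloor>)))
                 \<ge> ereal lam))"
proof -
  note pos = assms(1,2) and T = assms(3)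
  define P where "P k m = DeltaPow T d1 d2 k m" for k m
  have P0: "0 \<le> P k m" if "m > 0" for k m
    unfolding P_def using DeltaPow_nonneg[OF pos that] .
  have Pm: "P k m \<le> P k' m'" if "k' \<le> k" "0 < m" "m \<le> m'" for k k' m m'
  proof -
    have "P k m \<le> P k' m" unfolding P_def using DeltaPow_mono_n[OF T pos that(2) that(1)] .
    also have "\<dots> \<le> P k' m'" unfolding P_def using DeltaPow_mono_M[OF pos that(2,3)] .
    finally show ?thesis .
  qed
  have limP: "(\<lambda>a. P (n a) (M a)) \<longlonglongrightarrow> 0" unfolding P_def using assms(8) .
  have part1: "achievable T d1 d2 c"
    if c0: "c \<ge> 0" and cL: "ereal c < liminf (\<lambda>a. ereal (log 2 (real (M a)) / real (n a)))" for c
  proof -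
    obtain \<alpha> K where \<alpha>: "filterlim \<alpha> at_top sequentially"
      and K: "\<forall>k\<ge>K. n (\<alpha> k) \<le> k \<and> nat \<lfloor>2 powr (c * real k)\<rfloor> \<le> M (\<alpha> k) \<and> 0 < nat \<lfloor>2 powr (c * real k)\<rfloor>"
      using core[OF assms(4,5,6,7) c0 cL] by blast
    have "(\<lambda>k. P k (nat \<lfloor>2 powr (c * real k)\<rfloor>)) \<longlonglongrightarrow> 0"
    proof (rule tendsto_sandwich[of "\<lambda>_. 0" _ _ "\<lambda>k. P (n (\<alpha> k)) (M (\<alpha> k))"])
      show "\<forall>\<^sub>F k in sequentially. 0 \<le> P k (nat \<lfloor>2 powr (c * real k)\<rfloor>)"
        unfolding eventually_sequentially using K P0 by blast
      show "\<forall>\<^sub>F k in sequentially. P k (nat \<lfloor>2 powr (c * real k)\<rfloor>) \<le> P (n (\<alpha> k)) (M (\<alpha> k))"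
        unfolding eventually_sequentially using K Pm by blast
      show "(\<lambda>k. P (n (\<alpha> k)) (M (\<alpha> k))) \<longlonglongrightarrow> 0"
        using filterlim_compose[OF limP \<alpha>] .
    qed simp
    then show ?thesis unfolding achievable_def P_def using c0 by simp
  qed
  have part2: "liminf (\<lambda>k. neglog_rate k (DeltaPow T d1 d2 k (nat \<lfloor>2 powr (c * real k)\<rfloor>))) \<ge> ereal lam"
    if mu: "\<mu> \<ge> 0" and lam: "lam \<ge> 0" and bnd: "\<forall>a. DeltaPow T d1 d2 (n a) (M a) \<le> \<mu> * exp (- lam * real (n a))"
      and c0: "c \<ge> 0" and cL: "ereal c < liminf (\<lambda>a. ereal (log 2 (real (M a)) / real (n a)))" for \<mu> lam c
  proof -
    obtain \<alpha> K where \<alpha>: "filterlim \<alpha> at_top sequentially"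
      and r\<alpha>: "(\<lambda>k. real (n (\<alpha> k)) / real k) \<longlonglongrightarrow> 1"
      and K: "\<forall>k\<ge>K. n (\<alpha> k) \<le> k \<and> nat \<lfloor>2 powr (c * real k)\<rfloor> \<le> M (\<alpha> k) \<and> 0 < nat \<lfloor>2 powr (c * real k)\<rfloor>"
      using core[OF assms(4,5,6,7) c0 cL] by blast
    define \<mu>1 where "\<mu>1 = max \<mu> 1"
    have mu1: "\<mu>1 > 0" "\<mu> \<le> \<mu>1" unfolding \<mu>1_def by auto
    define g where "g k = lam * (real (n (\<alpha> k)) / real k) - ln \<mu>1 / real k" for k
    have gl: "g \<longlonglongrightarrow> lam * 1 - 0" unfolding g_def
      by (intro tendsto_diff tendsto_mult tendsto_const r\<alpha> lim_const_over_n)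
    have ev: "\<forall>\<^sub>F k in sequentially. ereal (g k) \<le> neglog_rate k (DeltaPow T d1 d2 k (nat \<lfloor>2 powr (c * real k)\<rfloor>))"
      unfolding eventually_sequentially
    proof (intro exI[of _ "max K 1"] allI impI)
      fix k assume k: "max K 1 \<le> k"
      then have kK: "K \<le> k" and kp: "real k > 0" by auto
      define x where "x = DeltaPow T d1 d2 k (nat \<lfloor>2 powr (c * real k)\<rfloor>)"
      define a where "a = \<alpha> k"
      have Ka: "n a \<le> k" "nat \<lfloor>2 powr (c * real k)\<rfloor> \<le> M a" "0 < nat \<lfloor>2 powr (c * real k)\<rfloor>"
        using K kK unfolding a_def by auto
      have x0: "0 \<le> x" unfolding x_def using P0[OF Ka(3)] by (simp add: P_def)
      have "x \<le> P (n a) (M a)" unfolding x_def using Pm[OF Ka(1) Ka(3) Ka(2)] by (simp add: P_def)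
      also have "\<dots> \<le> \<mu> * exp (- lam * real (n a))" using bnd by (simp add: P_def)
      also have "\<dots> \<le> \<mu>1 * exp (- lam * real (n a))" using mu1 by (intro mult_right_mono) auto
      finally have xb: "x \<le> \<mu>1 * exp (- lam * real (n a))" .
      show "ereal (g k) \<le> neglog_rate k x"
      proof (cases "x = 0")
        case True then show ?thesis by (simp add: neglog_rate_def)
      next
        case False
        then have xp: "x > 0" using x0 by simp
        have "ln x \<le> ln (\<mu>1 * exp (- lam * real (n a)))" using xp xb by (subst ln_le_cancel_iff) auto
        also have "\<dots> = ln \<mu>1 - lam * real (n a)" using mu1 by (simp add: ln_mult)
        finally have "lam * real (n a) - ln \<mu>1 \<le> - ln x" by simp
        then have "(lam * real (n a) - ln \<mu>1) / real k \<le> - ln x / real k"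
          using kp by (intro divide_right_mono) auto
        then have "g k \<le> - ln x / real k" unfolding g_def a_def by (simp add: diff_divide_distrib)
        then show ?thesis using False by (simp add: neglog_rate_def)
      qed
    qed
    have "liminf (\<lambda>k. ereal (g k)) = ereal lam"
      using gl by (intro lim_imp_Liminf) (auto simp: lim_ereal)
    moreover have "liminf (\<lambda>k. ereal (g k)) \<le> liminf (\<lambda>k. neglog_rate k (DeltaPow T d1 d2 k (nat \<lfloor>2 powr (c * real k)\<rfloor>)))"
      by (rule Liminf_mono[OF ev])
    ultimately show ?thesis by simp
  qed
  show ?thesis using part1 part2 by blast
qed


end
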